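(* For every $\epsilon\in(0,1)$, Algorithm $\mathsf{DLA}$ with parameter $\epsilon$ is deterministic and uses $O(n\log(1/\epsilon)/\epsilon)$ queries to $f$. It returns a set $S$ with $c(S)\le B$ and $$\mathrm{opt}\le(6+\epsilon)f(S),$$ where $\mathrm{opt}=\max\{f(T):T\subseteq V,\ c(T)\le B\}$.
   Context: Setting: $V$ is a finite ground set of size $n$. $f:2^V\to\mathbb{R}_{\ge 0}$ is a non-negative submodular set function with $f(\emptyset)=0$. Each $e\in V$ has a cost $c(e)>0$, and $c(S)=\sum_{e\in S}c(e)$. $B>0$ is a budget, and $c(e)\le B$ for every $e\in V$. A query is one evaluation of $f$ on a set. The notation $f(e\mid S)=f(S\cup\{e\})-f(S)$ is used. Algorithm $\mathsf{LA}$ on $(f,V,B)$ runs as follows. Let $V_1=\{e:c(e)\le B/2\}$, $e_{\max}\in\arg\max_{e\in V}f(e)$ and $X=Y=\emptyset$. Process each $e\in V_1$ once. Among $Z\in\{X,Y\}$ with $f(e\mid Z)/c(e)\ge f(Z)/B$, add $e$ to one maximizing $f(e\mid Z)/c(e)$, if any such $Z$ exists. Then for $T\in\{X,Y\}$, let $T'$ be the largest-cost set formed by the last $j$ elements added to $T$ ($0\le j\le |T|$) among those with cost at most $B$. Return the best of $X'$, $Y'$ and $\{e_{\max}\}$ under $f$. Algorithm $\mathsf{DLA}$ on $(f,V,B)$ with parameter $\epsilon\in(0,1)$ runs as follows. 1. Let $S'$ be the output of $\mathsf{LA}(f,V,B)$ and set $\Gamma=f(S')$. Set $\epsilon'=\epsilon/14$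 and $\Delta=\lceil\log(1/\epsilon')/\epsilon'\rceil$. 2. Phase 1. Set $\theta=19\Gamma/(6\epsilon' B)$ and $X=Y=\emptyset$. While $\theta\ge\Gamma(1-\epsilon')/(6B)$, do the following. Process each $e\in V\setminus(X\cup Y)$ in a fixed order. Among $T\in\{X,Y\}$ with $c(T\cup\{e\})\le B$ and $f(e\mid T)/c(e)\ge\theta$, choose one maximizing $f(e\mid T)/c(e)$; if such a $T$ exists, add $e$ to it. After the pass, set $\theta\leftarrow(1-\epsilon')\theta$. 3. Phase 2. For $T\in\{X,Y\}$, let $T^i$ be the set of the first $i$ elements added to $T$. For each $l=0,1,\dots,\Delta$: - let $X'_{(l)}=X^i$ for the largest $i\le|X|$ with $c(X^i)\le\epsilon'B(1+\epsilon')^l$; - let $e_X\in\arg\max\{f(X'_{(l)}\cup\{e\}): e\in V,\ c(X'_{(l)}\cup\{e\})\le B\}$, and set $X_{(l)}=X'_{(l)}\cup\{e_X\}$; - define $Y'_{(l)}$, $e_Y$ and $Y_{(l)}$ analogously from $Y$. 4. Return the set $S$ of maximum $f$ value among $S'$, $X$, $Y$, $X_{(0)},\dots,X_{(\Delta)}$, $Y_{(0)},\dots,Y_{(\Delta)}$. *)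

theory Defs
  imports Complex_Main "HOL-Library.Monad_Syntax"
begin

text \<open>Ground set V is given as a distinct list vs fixing the processing order;
  n = length vs. Costs c, budget B, objective f on subsets of V.\<close>

definition submodular_on :: "'a set \<Rightarrow> ('a set \<Rightarrow> real) \<Rightarrow> bool" where
  "submodular_on V f \<longleftrightarrow>
     (\<forall>A B. A \<subseteq> V \<longrightarrow> B \<subseteq> V \<longrightarrow> f (A \<union> B) + f (A \<inter> B) \<le> f A + f B)"

definition cost :: "('a \<Rightarrow> real) \<Rightarrow> 'a set \<Rightarrow> real" where
  "cost c S = (\<Sum>e\<in>S. c e)"

definition opt :: "('a set \<Rightarrow> real) \<Rightarrow> ('a \<Rightarrow> real) \<Rightarrow> real \<Rightarrow> 'a set \<Rightarrow> real" where
  "opt f c B V = Max {f T | T. T \<subseteq> V \<and> cost c T \<le> B}"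

text \<open>A computation returns its result together with the number of queries to f
  it performed. f is only ever evaluated through qry, which counts one query.\<close>

type_synonym 'b cnt = "'b \<times> nat"

definition ret :: "'b \<Rightarrow> 'b cnt" where
  "ret x = (x, 0)"

definition bnd :: "'b cnt \<Rightarrow> ('b \<Rightarrow> 'c cnt) \<Rightarrow> 'c cnt" where
  "bnd m g = (case g (fst m) of (y, k) \<Rightarrow> (y, snd m + k))"

adhoc_overloading Monad_Syntax.bind \<rightleftharpoons> bnd

definition qry :: "('a set \<Rightarrow> real) \<Rightarrow> 'a set \<Rightarrow> real cnt" where
  "qry f S = (f S, 1)"

definition marg :: "('a set \<Rightarrow> real) \<Rightarrow> 'a \<Rightarrow> 'a set \<Rightarrow> real cnt" where
  "marg f e Z = do { a \<leftarrow> qry f (insert e Z); b \<leftarrow> qry f Z; ret (a - b) }"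

fun foldM :: "('x \<Rightarrow> 's \<Rightarrow> 's cnt) \<Rightarrow> 'x list \<Rightarrow> 's \<Rightarrow> 's cnt" where
  "foldM g [] s = ret s"
| "foldM g (x # xs) s = do { s' \<leftarrow> g x s; foldM g xs s' }"

fun argmax_aux :: "('x \<Rightarrow> real cnt) \<Rightarrow> 'x list \<Rightarrow> 'x \<Rightarrow> real \<Rightarrow> 'x cnt" where
  "argmax_aux g [] b bv = ret b"
| "argmax_aux g (x # xs) b bv =
     do { v \<leftarrow> g x; if v > bv then argmax_aux g xs x v else argmax_aux g xs b bv }"

fun argmaxM :: "('x \<Rightarrow> real cnt) \<Rightarrow> 'x list \<Rightarrow> 'x cnt" where
  "argmaxM g [] = ret undefined"
| "argmaxM g (x # xs) = do { v \<leftarrow> g x; argmax_aux g xs x v }"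

text \<open>X and Y are kept as lists in order of insertion. Ties between X and Y go to X.\<close>
definition la_step :: "('a set \<Rightarrow> real) \<Rightarrow> ('a \<Rightarrow> real) \<Rightarrow> real \<Rightarrow> 'a
    \<Rightarrow> 'a list \<times> 'a list \<Rightarrow> ('a list \<times> 'a list) cnt" where
  "la_step f c B e st = do {
     gX \<leftarrow> marg f e (set (fst st)); fX \<leftarrow> qry f (set (fst st));
     gY \<leftarrow> marg f e (set (snd st)); fY \<leftarrow> qry f (set (snd st));
     let okX = (gX / c e \<ge> fX / B);
     let okY = (gY / c e \<ge> fY / B);
     ret (if okX \<and> (\<not> okY \<or> gX / c e \<ge> gY / c e) then (fst st @ [e], snd st)
          else if okY then (fst st, snd st @ [e]) else st) }"

definition suffix_set :: "('a \<Rightarrow> real) \<Rightarrow> real \<Rightarrow> 'a list \<Rightarrow> 'a set" where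
  "suffix_set c B xs =
     (let j = (GREATEST j. j \<le> length xs \<and> cost c (set (drop (length xs - j) xs)) \<le> B)
      in set (drop (length xs - j) xs))"

definition LA :: "('a set \<Rightarrow> real) \<Rightarrow> ('a \<Rightarrow> real) \<Rightarrow> real \<Rightarrow> 'a list \<Rightarrow> 'a set cnt" where
  "LA f c B vs = do {
     emax \<leftarrow> argmaxM (\<lambda>e. qry f {e}) vs;
     st \<leftarrow> foldM (la_step f c B) (filter (\<lambda>e. c e \<le> B / 2) vs) ([], []);
     argmaxM (qry f) [suffix_set c B (fst st), suffix_set c B (snd st), {emax}] }"

definition p1_step :: "('a set \<Rightarrow> real) \<Rightarrow> ('a \<Rightarrow> real) \<Rightarrow> real \<Rightarrow> real \<Rightarrow> 'a
    \<Rightarrow> 'a list \<times> 'a list \<Rightarrow> ('a list \<times> 'a list) cnt" where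
  "p1_step f c B \<theta> e st =
     (if e \<in> set (fst st) \<union> set (snd st) then ret st else do {
        gX \<leftarrow> marg f e (set (fst st));
        gY \<leftarrow> marg f e (set (snd st));
        let okX = (cost c (insert e (set (fst st))) \<le> B \<and> gX / c e \<ge> \<theta>);
        let okY = (cost c (insert e (set (snd st))) \<le> B \<and> gY / c e \<ge> \<theta>);
        ret (if okX \<and> (\<not> okY \<or> gX / c e \<ge> gY / c e) then (fst st @ [e], snd st)
             else if okY then (fst st, snd st @ [e]) else st) })"

text \<open>Number of passes of the while loop of Phase 1: the loop runs with
  theta = theta0 (1-eps')^k for k = 0,1,... as long as theta >= Gamma (1-eps')/(6B).
  If Gamma = 0 the literal loop never terminates; in that degenerate case we use the
  same (Gamma-independent) number of passes as for Gamma > 0.\<close>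
definition p1_passes :: "real \<Rightarrow> real \<Rightarrow> real \<Rightarrow> nat" where
  "p1_passes \<epsilon>' \<Gamma> B =
     (if \<Gamma> > 0 then
        (LEAST k. \<not> (19 * \<Gamma> / (6 * \<epsilon>' * B) * (1 - \<epsilon>') ^ k \<ge> \<Gamma> * (1 - \<epsilon>') / (6 * B)))
      else (LEAST k. \<not> (19 / \<epsilon>' * (1 - \<epsilon>') ^ k \<ge> (1 - \<epsilon>'))))"

definition prefix_set :: "('a \<Rightarrow> real) \<Rightarrow> real \<Rightarrow> 'a list \<Rightarrow> 'a set" where
  "prefix_set c bound xs =
     set (take (GREATEST i. i \<le> length xs \<and> cost c (set (take i xs)) \<le> bound) xs)"

definition p2_cand :: "('a set \<Rightarrow> real) \<Rightarrow> ('a \<Rightarrow> real) \<Rightarrow> real \<Rightarrow> real \<Rightarrow> 'a list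
    \<Rightarrow> 'a list \<Rightarrow> nat \<Rightarrow> 'a set cnt" where
  "p2_cand f c B \<epsilon>' vs xs l = do {
     let X' = prefix_set c (\<epsilon>' * B * (1 + \<epsilon>') ^ l) xs;
     eX \<leftarrow> argmaxM (\<lambda>e. qry f (insert e X')) (filter (\<lambda>e. cost c (insert e X') \<le> B) vs);
     ret (insert eX X') }"

definition DLA :: "('a set \<Rightarrow> real) \<Rightarrow> ('a \<Rightarrow> real) \<Rightarrow> real \<Rightarrow> real \<Rightarrow> 'a list \<Rightarrow> 'a set cnt" where
  "DLA f c B \<epsilon> vs = do {
     S' \<leftarrow> LA f c B vs;
     \<Gamma> \<leftarrow> qry f S';
     let \<epsilon>' = \<epsilon> / 14;
     let \<Delta> = nat \<lceil>log 2 (1 / \<epsilon>') / \<epsilon>'\<rceil>;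
     let \<theta>0 = 19 * \<Gamma> / (6 * \<epsilon>' * B);
     st \<leftarrow> foldM (\<lambda>k st. foldM (p1_step f c B (\<theta>0 * (1 - \<epsilon>') ^ k)) vs st)
                [0..<p1_passes \<epsilon>' \<Gamma> B] ([], []);
     Xs \<leftarrow> foldM (\<lambda>l acc. do { X \<leftarrow> p2_cand f c B \<epsilon>' vs (fst st) l; ret (acc @ [X]) })
                [0..<Suc \<Delta>] [];
     Ys \<leftarrow> foldM (\<lambda>l acc. do { Y \<leftarrow> p2_cand f c B \<epsilon>' vs (snd st) l; ret (acc @ [Y]) })
                [0..<Suc \<Delta>] [];
     argmaxM (qry f) ([S', set (fst st), set (snd st)] @ Xs @ Ys) }"

end

theory Submission
  imports Defs
begin

lemma fst_bnd[simp]: "fst (bnd m g) = fst (g (fst m))"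
  by (simp add: bnd_def split: prod.split)
lemma snd_bnd[simp]: "snd (bnd m g) = snd m + snd (g (fst m))"
  by (simp add: bnd_def split: prod.split)
lemma fst_ret[simp]: "fst (ret x) = x" by (simp add: ret_def)
lemma snd_ret[simp]: "snd (ret x) = 0" by (simp add: ret_def)
lemma fst_qry[simp]: "fst (qry f S) = f S" by (simp add: qry_def)
lemma snd_qry[simp]: "snd (qry f S) = 1" by (simp add: qry_def)
lemma fst_marg[simp]: "fst (marg f e Z) = f (insert e Z) - f Z" by (simp add: marg_def)
lemma snd_marg[simp]: "snd (marg f e Z) = 2" by (simp add: marg_def)

lemma fst_foldM: "fst (foldM g xs s) = fold (\<lambda>x s. fst (g x s)) xs s"
  by (induction xs arbitrary: s) auto

lemma snd_foldM_le: "(\<And>x s. x \<in> set xs \<Longrightarrow> snd (g x s) \<le> b) \<Longrightarrow> snd (foldM g xs s) \<le> b * length xs"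
proof (induction xs arbitrary: s)
  case Nil then show ?case by simp
next
  case (Cons a xs)
  have "snd (g a s) \<le> b" using Cons.prems by simp
  moreover have "snd (foldM g xs (fst (g a s))) \<le> b * length xs" using Cons by simp
  ultimately show ?case by simp
qed

lemma argmax_aux_props:
  assumes "bv = fst (g b)"
  shows "fst (argmax_aux g xs b bv) \<in> insert b (set xs) \<and>
         fst (g b) \<le> fst (g (fst (argmax_aux g xs b bv))) \<and>
         (\<forall>x\<in>set xs. fst (g x) \<le> fst (g (fst (argmax_aux g xs b bv))))"
  using assms
proof (induction xs arbitrary: b bv)
  case Nil then show ?case by simp
next
  case (Cons a xs)
  show ?case
  proof (cases "fst (g a) > bv")
    case True
    have IH: "fst (argmax_aux g xs a (fst (g a))) \<in> insert a (set xs) \<and>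
         fst (g a) \<le> fst (g (fst (argmax_aux g xs a (fst (g a))))) \<and>
         (\<forall>x\<in>set xs. fst (g x) \<le> fst (g (fst (argmax_aux g xs a (fst (g a))))))"
      using Cons.IH by simp
    then show ?thesis using True Cons.prems by auto
  next
    case False
    have IH: "fst (argmax_aux g xs b bv) \<in> insert b (set xs) \<and>
         fst (g b) \<le> fst (g (fst (argmax_aux g xs b bv))) \<and>
         (\<forall>x\<in>set xs. fst (g x) \<le> fst (g (fst (argmax_aux g xs b bv))))"
      using Cons.IH Cons.prems by simp
    then show ?thesis using False Cons.prems by auto
  qed
qed

lemma argmaxM_props:
  assumes "xs \<noteq> []"
  shows "fst (argmaxM g xs) \<in> set xs \<and> (\<forall>x\<in>set xs. fst (g x) \<le> fst (g (fst (argmaxM g xs))))"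
proof -
  obtain a ys where xs: "xs = a # ys" using assms by (cases xs) auto
  show ?thesis using argmax_aux_props[of "fst (g a)" g a ys] xs by auto
qed

lemma snd_argmax_aux: "(\<And>x. snd (g x) = 1) \<Longrightarrow> snd (argmax_aux g xs b bv) = length xs"
  by (induction xs arbitrary: b bv) auto

lemma snd_argmaxM: "(\<And>x. snd (g x) = 1) \<Longrightarrow> snd (argmaxM g xs) = length xs"
  by (cases xs) (auto simp: snd_argmax_aux)


lemma cost_insert: "finite S \<Longrightarrow> e \<notin> S \<Longrightarrow> cost c (insert e S) = c e + cost c S"
  by (simp add: cost_def)

lemma cost_empty[simp]: "cost c {} = 0" by (simp add: cost_def)

lemma cost_mono: "finite T \<Longrightarrow> S \<subseteq> T \<Longrightarrow> (\<forall>e\<in>T. 0 \<le> c e) \<Longrightarrow> cost c S \<le> cost c T"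
  unfolding cost_def by (rule sum_mono2) auto

lemma cost_nonneg: "(\<forall>e\<in>S. 0 \<le> c e) \<Longrightarrow> 0 \<le> cost c S"
  unfolding cost_def by (rule sum_nonneg) auto

lemma cost_union_disj: "finite S \<Longrightarrow> finite T \<Longrightarrow> S \<inter> T = {} \<Longrightarrow> cost c (S \<union> T) = cost c S + cost c T"
  unfolding cost_def by (rule sum.union_disjoint)

lemma cost_le_elem: "finite S \<Longrightarrow> e \<in> S \<Longrightarrow> (\<forall>x\<in>S. 0 \<le> c x) \<Longrightarrow> c e \<le> cost c S"
  using cost_mono[of S "{e}" c] by (simp add: cost_def)

context
  fixes V :: "'a set" and f :: "'a set \<Rightarrow> real"
  assumes sm: "submodular_on V f" and nn: "\<forall>S. S \<subseteq> V \<longrightarrow> f S \<ge> 0" and f0: "f {} = 0"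
begin

lemma submod: "A \<subseteq> V \<Longrightarrow> B \<subseteq> V \<Longrightarrow> f (A \<union> B) + f (A \<inter> B) \<le> f A + f B"
  using sm unfolding submodular_on_def by blast

lemma marg_anti:
  assumes "A \<subseteq> A'" "A' \<subseteq> V" "u \<in> V" "u \<notin> A'"
  shows "f (insert u A') - f A' \<le> f (insert u A) - f A"
proof -
  have "f (A' \<union> insert u A) + f (A' \<inter> insert u A) \<le> f A' + f (insert u A)"
    using submod[of A' "insert u A"] assms by auto
  moreover have "A' \<union> insert u A = insert u A'" using assms by auto
  moreover have "A' \<inter> insert u A = A" using assms by auto
  ultimately show ?thesis by simp
qed

lemma marg_single:
  assumes "A \<subseteq> V" "u \<in> V" "u \<notin> A"
  shows "f (insert u A) - f A \<le> f {u}"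
  using marg_anti[of "{}" A u] assms f0 by simp

lemma subadd:
  assumes "A \<subseteq> V" "B \<subseteq> V"
  shows "f (A \<union> B) \<le> f A + f B"
proof -
  have "f (A \<inter> B) \<ge> 0" using nn[rule_format, of "A \<inter> B"] assms by auto
  then show ?thesis using submod[OF assms] by simp
qed

lemma two_sides:
  assumes "Q \<subseteq> V" "X \<subseteq> V" "Y \<subseteq> V" "X \<inter> Y = {}"
  shows "f Q \<le> f (Q \<union> X) + f (Q \<union> Y)"
proof -
  have "f ((Q \<union> X) \<union> (Q \<union> Y)) + f ((Q \<union> X) \<inter> (Q \<union> Y)) \<le> f (Q \<union> X) + f (Q \<union> Y)"
    using submod[of "Q \<union> X" "Q \<union> Y"] assms by auto
  moreover have "(Q \<union> X) \<inter> (Q \<union> Y) = Q" using assms by auto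
  moreover have "f ((Q \<union> X) \<union> (Q \<union> Y)) \<ge> 0" using nn assms by auto
  ultimately show ?thesis by simp
qed

lemma union_marg_sum:
  assumes "finite P" "P \<subseteq> V" "A \<subseteq> V"
  shows "f (A \<union> P) \<le> f A + (\<Sum>u\<in>P - A. f (insert u A) - f A)"
  using assms
proof (induction P rule: finite_induct)
  case empty then show ?case by simp
next
  case (insert x F)
  show ?case
  proof (cases "x \<in> A \<union> F")
    case True
    then have "A \<union> insert x F = A \<union> F" by auto
    moreover have "insert x F - A = F - A" using True insert.hyps by auto
    ultimately show ?thesis using insert by auto
  next
    case False
    have "f (insert x (A \<union> F)) - f (A \<union> F) \<le> f (insert x A) - f A"
      using marg_anti[of A "A \<union> F" x] False insert.prems by auto
    moreover have "insert x F - A = insert x (F - A)" using False by auto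
    moreover have "(\<Sum>u\<in>insert x (F - A). f (insert u A) - f A) = (f (insert x A) - f A) + (\<Sum>u\<in>F - A. f (insert u A) - f A)"
      using False insert.hyps by (simp add: sum.insert)
    moreover have "f (A \<union> F) \<le> f A + (\<Sum>u\<in>F - A. f (insert u A) - f A)" using insert by auto
    ultimately show ?thesis by simp
  qed
qed

end


definition gn :: "('a set \<Rightarrow> real) \<Rightarrow> 'a \<Rightarrow> 'a list \<Rightarrow> real" where
  "gn f e L = f (insert e (set L)) - f (set L)"

definition gl :: "('a set \<Rightarrow> real) \<Rightarrow> 'a list \<Rightarrow> 'a \<Rightarrow> real" where
  "gl f W u = (if u \<in> set W then gn f u (takeWhile (\<lambda>x. x \<noteq> u) W) else 0)"

definition chainP :: "('a list \<Rightarrow> 'a \<Rightarrow> bool) \<Rightarrow> 'a list \<Rightarrow> bool" where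
  "chainP g xs = (\<forall>ys e zs. xs = ys @ e # zs \<longrightarrow> g ys e)"

lemma chainP_Nil[simp]: "chainP g []"
  by (simp add: chainP_def)

lemma chainP_snoc: "chainP g (xs @ [e]) = (chainP g xs \<and> g xs e)"
proof
  assume h: "chainP g (xs @ [e])"
  have "g xs e" using h by (simp add: chainP_def)
  moreover have "chainP g xs"
    unfolding chainP_def
  proof (intro allI impI)
    fix ys a zs assume "xs = ys @ a # zs"
    then have "xs @ [e] = ys @ a # (zs @ [e])" by simp
    then show "g ys a" using h by (simp add: chainP_def)
  qed
  ultimately show "chainP g xs \<and> g xs e" by simp
next
  assume h: "chainP g xs \<and> g xs e"
  show "chainP g (xs @ [e])"
    unfolding chainP_def
  proof (intro allI impI)
    fix ys a zs assume eq: "xs @ [e] = ys @ a # zs"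
    show "g ys a"
    proof (cases zs rule: rev_exhaust)
      case Nil
      then show ?thesis using eq h by simp
    next
      case (snoc zs' b)
      then have "xs = ys @ a # zs'" using eq by simp
      then show ?thesis using h by (simp add: chainP_def)
    qed
  qed
qed

lemma takeWhile_split: "u \<notin> set ys \<Longrightarrow> takeWhile (\<lambda>x. x \<noteq> u) (ys @ u # zs) = ys"
  by (induction ys) auto

lemma gl_split: "u \<notin> set ys \<Longrightarrow> gl f (ys @ u # zs) u = gn f u ys"
  by (simp add: gl_def takeWhile_split)

lemma gl_notin: "u \<notin> set W \<Longrightarrow> gl f W u = 0"
  by (simp add: gl_def)

lemma gl_snoc_old: "u \<in> set W \<Longrightarrow> gl f (W @ [e]) u = gl f W u"
  by (simp add: gl_def takeWhile_append1)

lemma gl_snoc_new: "e \<notin> set W \<Longrightarrow> gl f (W @ [e]) e = gn f e W"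
  using gl_split[of e W f "[]"] by simp

lemma gl_append_old: "u \<in> set W \<Longrightarrow> gl f (W @ s) u = gl f W u"
  by (simp add: gl_def takeWhile_append1)

lemma gl_snoc_other: "u \<noteq> e \<Longrightarrow> gl f (W @ [e]) u = gl f W u"
  by (cases "u \<in> set W") (auto simp: gl_snoc_old gl_notin)

lemma gl_sum: "distinct W \<Longrightarrow> (\<Sum>u\<in>set W. gl f W u) = f (set W) - f {}"
proof (induction W rule: rev_induct)
  case Nil then show ?case by simp
next
  case (snoc e W)
  have dW: "distinct W" "e \<notin> set W" using snoc.prems by auto
  have "(\<Sum>u\<in>set (W @ [e]). gl f (W @ [e]) u) = gl f (W @ [e]) e + (\<Sum>u\<in>set W. gl f (W @ [e]) u)"
    using dW by (simp add: sum.insert)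
  also have "(\<Sum>u\<in>set W. gl f (W @ [e]) u) = (\<Sum>u\<in>set W. gl f W u)"
    by (rule sum.cong) (auto simp: gl_snoc_old)
  also have "gl f (W @ [e]) e = gn f e W" using dW by (simp add: gl_snoc_new)
  finally show ?case using snoc dW by (simp add: gn_def)
qed

lemma gl_nonneg:
  assumes "chainP (\<lambda>ys e. 0 \<le> gn f e ys) W" "distinct W"
  shows "0 \<le> gl f W u"
proof (cases "u \<in> set W")
  case True
  then obtain ys zs where W: "W = ys @ u # zs" by (meson split_list)
  then have "u \<notin> set ys" using assms(2) by auto
  then have "gl f W u = gn f u ys" using W gl_split by metis
  then show ?thesis using assms(1) W by (simp add: chainP_def)
next
  case False then show ?thesis by (simp add: gl_notin)
qed

lemma gl_sum_le:
  assumes "chainP (\<lambda>ys e. 0 \<le> gn f e ys) W" "distinct W" "finite P"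
  shows "(\<Sum>u\<in>P. gl f W u) \<le> f (set W) - f {}"
proof -
  have "(\<Sum>u\<in>P. gl f W u) = (\<Sum>u\<in>P \<inter> set W. gl f W u)"
    by (rule sum.mono_neutral_right) (auto simp: assms gl_notin)
  also have "\<dots> \<le> (\<Sum>u\<in>set W. gl f W u)"
    by (rule sum_mono2) (auto simp: gl_nonneg assms)
  finally show ?thesis using gl_sum assms by metis
qed

lemma chainP_mono: "chainP g xs \<Longrightarrow> (\<And>ys e. g ys e \<Longrightarrow> h ys e) \<Longrightarrow> chainP h xs"
  by (auto simp: chainP_def)


lemma chainP_mono2: "chainP g xs \<Longrightarrow> (\<And>ys e zs. xs = ys @ e # zs \<Longrightarrow> g ys e \<Longrightarrow> h ys e) \<Longrightarrow> chainP h xs"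
  by (auto simp: chainP_def)

definition okL :: "('a set \<Rightarrow> real) \<Rightarrow> ('a \<Rightarrow> real) \<Rightarrow> real \<Rightarrow> 'a \<Rightarrow> 'a list \<Rightarrow> bool" where
  "okL f c B e L = (c e * f (set L) / B \<le> gn f e L)"

definition lstp where
  "lstp f c B e Z Z' W W' =
    ((Z' = Z @ [e] \<and> W' = W \<and> okL f c B e Z \<and> (okL f c B e W \<longrightarrow> gn f e W \<le> gn f e Z)) \<or>
     (W' = W @ [e] \<and> Z' = Z \<and> okL f c B e W \<and> (okL f c B e Z \<longrightarrow> gn f e Z \<le> gn f e W)) \<or>
     (Z' = Z \<and> W' = W \<and> \<not> okL f c B e Z \<and> \<not> okL f c B e W))"

lemma lstp_sym: "lstp f c B e Z Z' W W' \<Longrightarrow> lstp f c B e W W' Z Z'"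
  unfolding lstp_def by blast

lemma la_step_lstp:
  assumes "c e > 0" "B > 0"
  shows "lstp f c B e X (fst (fst (la_step f c B e (X, Y)))) Y (snd (fst (la_step f c B e (X, Y))))"
proof -
  define gX where "gX = gn f e X"
  define gY where "gY = gn f e Y"
  have okX: "okL f c B e X = (gX / c e \<ge> f (set X) / B)"
    using assms by (simp add: okL_def gX_def field_simps)
  have okY: "okL f c B e Y = (gY / c e \<ge> f (set Y) / B)"
    using assms by (simp add: okL_def gY_def field_simps)
  have cmp: "(gX / c e \<ge> gY / c e) = (gX \<ge> gY)" using assms by (simp add: divide_le_cancel)
  have st: "fst (la_step f c B e (X, Y)) =
     (if (gX / c e \<ge> f (set X) / B) \<and> (\<not> (gY / c e \<ge> f (set Y) / B) \<or> gX / c e \<ge> gY / c e) then (X @ [e], Y)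
      else if (gY / c e \<ge> f (set Y) / B) then (X, Y @ [e]) else (X, Y))"
    by (simp add: la_step_def Let_def gX_def gY_def gn_def)
  show ?thesis
    unfolding st lstp_def okX okY cmp[symmetric] gX_def[symmetric] gY_def[symmetric]
    using cmp by auto
qed


locale sfun =
  fixes V :: "'a set" and f :: "'a set \<Rightarrow> real" and c :: "'a \<Rightarrow> real" and B :: real
  assumes sm: "submodular_on V f" and nn: "\<And>S. S \<subseteq> V \<Longrightarrow> f S \<ge> 0" and f0: "f {} = 0"
    and Bpos: "B > 0" and cpos: "\<And>e. e \<in> V \<Longrightarrow> 0 < c e" and finV: "finite V"
begin

lemma nn_all: "\<forall>S. S \<subseteq> V \<longrightarrow> f S \<ge> 0" using nn by auto
lemmas marg_anti = marg_anti[OF sm nn_all f0]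
lemmas marg_single = marg_single[OF sm nn_all f0]
lemmas subadd = subadd[OF sm nn_all f0]
lemmas two_sides = two_sides[OF sm nn_all f0]
lemmas union_marg_sum = union_marg_sum[OF sm nn_all f0]

lemma gn_anti: "set L \<subseteq> set L' \<Longrightarrow> set L' \<subseteq> V \<Longrightarrow> u \<in> V \<Longrightarrow> u \<notin> set L' \<Longrightarrow> gn f u L' \<le> gn f u L"
  unfolding gn_def by (rule marg_anti) auto

definition InvS :: "'a set \<Rightarrow> 'a list \<Rightarrow> 'a list \<Rightarrow> bool" where
  "InvS D Z W = (distinct Z \<and> set Z \<subseteq> D \<and> chainP (\<lambda>ys e. c e * f (set ys) / B \<le> gn f e ys) Z \<and>
     (\<forall>u\<in>D - set Z. gn f u Z \<le> c u * f (set Z) / B + gl f W u))"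

lemma chain_nonneg:
  assumes "chainP (\<lambda>ys e. c e * f (set ys) / B \<le> gn f e ys) Z" "set Z \<subseteq> V"
  shows "chainP (\<lambda>ys e. 0 \<le> gn f e ys) Z"
proof (rule chainP_mono2[OF assms(1)])
  fix ys e zs assume Z: "Z = ys @ e # zs" and g: "c e * f (set ys) / B \<le> gn f e ys"
  have "set ys \<subseteq> V" "e \<in> V" using Z assms(2) by auto
  then have "0 \<le> c e * f (set ys) / B" using nn cpos Bpos by (simp add: less_imp_le)
  then show "0 \<le> gn f e ys" using g by linarith
qed

lemma invS_step:
  assumes D: "D \<subseteq> V" "e \<in> V" "e \<notin> D"
    and I1: "InvS D Z W" and I2: "InvS D W Z" and dj: "set Z \<inter> set W = {}"
    and st: "lstp f c B e Z Z' W W'"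
  shows "InvS (insert e D) Z' W'"
proof -
  have dZ: "distinct Z" "set Z \<subseteq> D" "chainP (\<lambda>ys e. c e * f (set ys) / B \<le> gn f e ys) Z"
    and bZ: "\<forall>u\<in>D - set Z. gn f u Z \<le> c u * f (set Z) / B + gl f W u"
    using I1 by (auto simp: InvS_def)
  have dW: "distinct W" "set W \<subseteq> D" "chainP (\<lambda>ys e. c e * f (set ys) / B \<le> gn f e ys) W"
    using I2 by (auto simp: InvS_def)
  have WV: "set W \<subseteq> V" using dW D by auto
  have glW: "\<And>u. 0 \<le> gl f W u" by (rule gl_nonneg[OF chain_nonneg[OF dW(3) WV] dW(1)])
  have ce: "0 < c e" using cpos D by auto
  have fZ: "0 \<le> f (set Z)" using nn[of "set Z"] dZ D by auto
  have fW: "0 \<le> f (set W)" using nn[of "set W"] dW D by auto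
  have eZ: "e \<notin> set Z" "e \<notin> set W" using dZ dW D by auto
  from st consider
      (a) "Z' = Z @ [e]" "W' = W" "okL f c B e Z"
    | (b) "W' = W @ [e]" "Z' = Z" "okL f c B e W" "okL f c B e Z \<longrightarrow> gn f e Z \<le> gn f e W"
    | (c) "Z' = Z" "W' = W" "\<not> okL f c B e Z"
    unfolding lstp_def by blast
  then show ?thesis
  proof cases
    case a
    have ok: "c e * f (set Z) / B \<le> gn f e Z" using a by (simp add: okL_def)
    have "0 \<le> c e * f (set Z) / B" using ce fZ Bpos by simp
    then have mono: "f (set Z) \<le> f (insert e (set Z))" using ok by (simp add: gn_def)
    have "\<forall>u\<in>insert e D - set (Z @ [e]). gn f u (Z @ [e]) \<le> c u * f (set (Z @ [e])) / B + gl f W u"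
    proof
      fix u assume u: "u \<in> insert e D - set (Z @ [e])"
      then have uD: "u \<in> D - set Z" "u \<noteq> e" by auto
      have "gn f u (Z @ [e]) \<le> gn f u Z"
        by (rule gn_anti) (use uD D dZ in auto)
      also have "\<dots> \<le> c u * f (set Z) / B + gl f W u" using bZ uD by auto
      also have "\<dots> \<le> c u * f (set (Z @ [e])) / B + gl f W u"
      proof -
        have "c u \<ge> 0" using cpos uD D by (meson less_imp_le subsetD DiffD1)
        then have "c u * f (set Z) \<le> c u * f (set (Z @ [e]))" using mono by (simp add: mult_left_mono)
        then show ?thesis using Bpos by (simp add: divide_right_mono)
      qed
      finally show "gn f u (Z @ [e]) \<le> c u * f (set (Z @ [e])) / B + gl f W u" .
    qed
    then show ?thesis using a dZ eZ ok D by (auto simp: InvS_def chainP_snoc)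
  next
    case b
    have "\<forall>u\<in>insert e D - set Z. gn f u Z \<le> c u * f (set Z) / B + gl f (W @ [e]) u"
    proof
      fix u assume u: "u \<in> insert e D - set Z"
      show "gn f u Z \<le> c u * f (set Z) / B + gl f (W @ [e]) u"
      proof (cases "u = e")
        case False
        then have "gl f (W @ [e]) u = gl f W u" by (simp add: gl_snoc_other)
        then show ?thesis using bZ u False by auto
      next
        case True
        have gle: "gl f (W @ [e]) e = gn f e W" using eZ by (simp add: gl_snoc_new)
        have okW: "c e * f (set W) / B \<le> gn f e W" using b by (simp add: okL_def)
        have p1: "0 \<le> c e * f (set W) / B" using ce fW Bpos by simp
        have p2: "0 \<le> c e * f (set Z) / B" using ce fZ Bpos by simp
        show ?thesis
        proof (cases "okL f c B e Z")
          case True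
          then show ?thesis using b gle p2 \<open>u = e\<close> by auto
        next
          case False
          then show ?thesis using gle okW p1 \<open>u = e\<close> by (auto simp: okL_def)
        qed
      qed
    qed
    then show ?thesis using b dZ by (auto simp: InvS_def)
  next
    case c
    have "\<forall>u\<in>insert e D - set Z. gn f u Z \<le> c u * f (set Z) / B + gl f W u"
    proof
      fix u assume u: "u \<in> insert e D - set Z"
      show "gn f u Z \<le> c u * f (set Z) / B + gl f W u"
      proof (cases "u = e")
        case False then show ?thesis using bZ u by auto
      next
        case True
        then show ?thesis using c eZ by (auto simp: okL_def gl_notin)
      qed
    qed
    then show ?thesis using c dZ by (auto simp: InvS_def)
  qed
qed

end


context sfun
begin

definition Inv :: "'a set \<Rightarrow> 'a list \<Rightarrow> 'a list \<Rightarrow> bool" where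
  "Inv D X Y = (InvS D X Y \<and> InvS D Y X \<and> set X \<inter> set Y = {})"

lemma inv_fold:
  assumes "distinct xs" "set xs \<subseteq> V" "set xs \<inter> D = {}" "D \<subseteq> V" "Inv D X Y"
  shows "Inv (D \<union> set xs) (fst (fold (\<lambda>e st. fst (la_step f c B e st)) xs (X, Y)))
                           (snd (fold (\<lambda>e st. fst (la_step f c B e st)) xs (X, Y)))"
  using assms
proof (induction xs arbitrary: D X Y)
  case Nil then show ?case by simp
next
  case (Cons a xs)
  define X' where "X' = fst (fst (la_step f c B a (X, Y)))"
  define Y' where "Y' = snd (fst (la_step f c B a (X, Y)))"
  have st: "fst (la_step f c B a (X, Y)) = (X', Y')" by (simp add: X'_def Y'_def)
  have ca: "c a > 0" using cpos Cons.prems by auto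
  have l1: "lstp f c B a X X' Y Y'" using la_step_lstp[of c a B f X Y, OF ca Bpos] by (simp add: X'_def Y'_def)
  have l2: "lstp f c B a Y Y' X X'" using lstp_sym[OF l1] .
  have aD: "a \<in> V" "a \<notin> D" using Cons.prems by auto
  have I: "InvS D X Y" "InvS D Y X" "set X \<inter> set Y = {}" using Cons.prems by (auto simp: Inv_def)
  have aXY: "a \<notin> set X" "a \<notin> set Y" using I aD by (auto simp: InvS_def)
  have "set X' \<inter> set Y' = {}" using l1 I(3) aXY unfolding lstp_def by auto
  then have "Inv (insert a D) X' Y'"
    using invS_step[OF Cons.prems(4) aD I(1) I(2) I(3) l1] invS_step[OF Cons.prems(4) aD I(2) I(1) _ l2] I(3)
    by (auto simp: Inv_def Int_commute)
  moreover have "distinct xs" "set xs \<subseteq> V" "set xs \<inter> insert a D = {}" "insert a D \<subseteq> V"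
    using Cons.prems by auto
  ultimately have "Inv (insert a D \<union> set xs) (fst (fold (\<lambda>e st. fst (la_step f c B e st)) xs (X', Y')))
                           (snd (fold (\<lambda>e st. fst (la_step f c B e st)) xs (X', Y')))"
    using Cons.IH by blast
  then show ?case using st by simp
qed

lemma growth:
  assumes "chainP (\<lambda>ys e. c e * f (set ys) / B \<le> gn f e ys) (R @ S)" "distinct (R @ S)" "set (R @ S) \<subseteq> V"
  shows "cost c (set S) * f (set R) / B \<le> f (set (R @ S)) - f (set R)"
  using assms
proof (induction S rule: rev_induct)
  case Nil then show ?case by simp
next
  case (snoc e S)
  have ch: "chainP (\<lambda>ys e. c e * f (set ys) / B \<le> gn f e ys) (R @ S)"
    and ge: "c e * f (set (R @ S)) / B \<le> gn f e (R @ S)"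
    using snoc.prems(1) chainP_snoc[of _ "R @ S" e] by auto
  have IH: "cost c (set S) * f (set R) / B \<le> f (set (R @ S)) - f (set R)"
    using snoc ch by auto
  have fR: "0 \<le> f (set R)" using nn snoc.prems(3) by auto
  have cS: "0 \<le> cost c (set S)" using cost_nonneg[of "set S" c] cpos snoc.prems(3) by (auto intro: less_imp_le)
  have "0 \<le> cost c (set S) * f (set R) / B" using fR cS Bpos by simp
  then have mono: "f (set R) \<le> f (set (R @ S))" using IH by linarith
  have ce: "0 < c e" using cpos snoc.prems(3) by auto
  have "c e * f (set R) \<le> c e * f (set (R @ S))" using mono ce by simp
  then have m2: "c e * f (set R) / B \<le> c e * f (set (R @ S)) / B" using Bpos by (simp add: divide_right_mono)
  have eS: "e \<notin> set S" using snoc.prems(2) by auto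
  have cost: "cost c (set (S @ [e])) = c e + cost c (set S)" using eS by (simp add: cost_insert)
  have "cost c (set (S @ [e])) * f (set R) / B = c e * f (set R) / B + cost c (set S) * f (set R) / B"
    unfolding cost by (simp add: algebra_simps add_divide_distrib)
  also have "\<dots> \<le> gn f e (R @ S) + (f (set (R @ S)) - f (set R))" using m2 ge IH by linarith
  also have "\<dots> = f (set (R @ S @ [e])) - f (set R)" by (simp add: gn_def)
  finally show ?case by simp
qed

lemma suffix_props:
  assumes ch: "chainP (\<lambda>ys e. c e * f (set ys) / B \<le> gn f e ys) T" and d: "distinct T" and TV: "set T \<subseteq> V"
    and small: "\<forall>e\<in>set T. c e \<le> B / 2"
  shows "suffix_set c B T \<subseteq> set T \<and> cost c (suffix_set c B T) \<le> B \<and> f (set T) \<le> 3 * f (suffix_set c B T)"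
proof -
  define L where "L = length T"
  define P where "P = (\<lambda>j. j \<le> L \<and> cost c (set (drop (L - j) T)) \<le> B)"
  define j where "j = (GREATEST j. P j)"
  have P0: "P 0" using Bpos by (simp add: P_def L_def)
  have bnd: "\<forall>y. P y \<longrightarrow> y \<le> L" by (simp add: P_def)
  have Pj: "P j" unfolding j_def by (rule GreatestI_nat[of P 0 L, OF P0]) (use bnd in auto)
  have jmax: "\<And>y. P y \<Longrightarrow> y \<le> j" unfolding j_def using Greatest_le_nat[of P _ L] bnd by blast
  have suf: "suffix_set c B T = set (drop (L - j) T)"
    by (simp add: suffix_set_def L_def P_def j_def Let_def)
  have sub: "suffix_set c B T \<subseteq> set T" unfolding suf by (rule set_drop_subset)
  have cst: "cost c (suffix_set c B T) \<le> B" using Pj by (simp add: suf P_def)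
  define R where "R = take (L - j) T"
  define S where "S = drop (L - j) T"
  have TRS: "T = R @ S" by (simp add: R_def S_def)
  have fS: "0 \<le> f (set S)" using nn TV TRS by auto
  have fR: "0 \<le> f (set R)" using nn TV TRS by auto
  have subadd': "f (set T) \<le> f (set R) + f (set S)"
    using subadd[of "set R" "set S"] TV TRS by auto
  have "f (set T) \<le> 3 * f (set S)"
  proof (cases "j = L")
    case True
    then have "S = T" by (simp add: S_def)
    then show ?thesis using fS by simp
  next
    case False
    then have jL: "j < L" using Pj by (simp add: P_def)
    have nP: "\<not> P (Suc j)" using jmax by fastforce
    define m where "m = L - Suc j"
    have mL: "m < L" using jL by (simp add: m_def)
    have dm: "drop m T = T ! m # drop (Suc m) T" using mL by (simp add: L_def Cons_nth_drop_Suc)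
    have sm: "Suc m = L - j" using jL by (simp add: m_def)
    have "B < cost c (set (drop m T))" using nP jL by (simp add: P_def m_def)
    moreover have "T ! m \<notin> set (drop (Suc m) T)" using d mL
      by (metis L_def distinct_drop dm distinct.simps(2))
    ultimately have "B < c (T ! m) + cost c (set S)"
      using dm sm by (simp add: S_def cost_insert)
    moreover have "c (T ! m) \<le> B / 2" using small mL by (simp add: L_def)
    ultimately have cS: "B / 2 < cost c (set S)" by linarith
    have gr: "cost c (set S) * f (set R) / B \<le> f (set T) - f (set R)"
      using growth[of R S] ch d TV TRS by simp
    have "f (set R) / 2 \<le> cost c (set S) * f (set R) / B"
    proof -
      have "B / 2 * f (set R) \<le> cost c (set S) * f (set R)" using cS fR mult_right_mono[of "B/2" "cost c (set S)" "f (set R)"] by simp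
      then show ?thesis using Bpos by (simp add: field_simps)
    qed
    then show ?thesis using gr subadd' by linarith
  qed
  then show ?thesis using sub cst by (simp add: suf S_def)
qed

end


context sfun
begin

lemma la_side:
  assumes I: "InvS D Z W" and D: "{u\<in>V. c u \<le> B / 2} \<subseteq> D" "D \<subseteq> V"
    and chW: "chainP (\<lambda>ys e. 0 \<le> gn f e ys) W" and dW: "distinct W"
    and fZ: "f (set Z) \<le> 3 * \<Gamma>" and fW: "f (set W) \<le> 3 * \<Gamma>" and sing: "\<forall>u\<in>V. f {u} \<le> \<Gamma>"
    and Q: "Q \<subseteq> V" "cost c Q \<le> B"
  shows "f (Q \<union> set Z) \<le> 9 * \<Gamma>"
proof -
  have ZD: "set Z \<subseteq> D" and bZ: "\<forall>u\<in>D - set Z. gn f u Z \<le> c u * f (set Z) / B + gl f W u"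
    using I by (auto simp: InvS_def)
  have ZV: "set Z \<subseteq> V" using ZD D by auto
  have fZ0: "0 \<le> f (set Z)" using nn ZV by auto
  have G0: "0 \<le> \<Gamma>" using fZ fZ0 by linarith
  have finQ: "finite Q" using Q finV finite_subset by auto
  define Qb where "Qb = {u\<in>Q. B / 2 < c u}"
  define Qs where "Qs = {u\<in>Q. c u \<le> B / 2}"
  have fQb: "finite Qb" "finite Qs" using finQ by (auto simp: Qb_def Qs_def)
  have A: "f (set Z \<union> Q) \<le> f (set Z) + (\<Sum>u\<in>Q - set Z. gn f u Z)"
    using union_marg_sum[OF finQ Q(1) ZV] by (simp add: gn_def)
  have split: "Q - set Z = (Qb - set Z) \<union> (Qs - set Z)" by (auto simp: Qb_def Qs_def)
  have sum_split: "(\<Sum>u\<in>Q - set Z. gn f u Z) = (\<Sum>u\<in>Qb - set Z. gn f u Z) + (\<Sum>u\<in>Qs - set Z. gn f u Z)"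
    unfolding split by (rule sum.union_disjoint) (use fQb in \<open>auto simp: Qb_def Qs_def\<close>)
  have sb: "(\<Sum>u\<in>Qb - set Z. gn f u Z) \<le> real (card Qb) * \<Gamma>"
  proof -
    have "(\<Sum>u\<in>Qb - set Z. gn f u Z) \<le> (\<Sum>u\<in>Qb - set Z. \<Gamma>)"
    proof (rule sum_mono)
      fix u assume u: "u \<in> Qb - set Z"
      then have uV: "u \<in> V" using Q by (auto simp: Qb_def)
      have "gn f u Z \<le> f {u}" unfolding gn_def by (rule marg_single) (use ZV uV u in auto)
      then show "gn f u Z \<le> \<Gamma>" using sing uV by fastforce
    qed
    also have "\<dots> = real (card (Qb - set Z)) * \<Gamma>" by simp
    also have "\<dots> \<le> real (card Qb) * \<Gamma>"
      using G0 card_mono[OF fQb(1), of "Qb - set Z"] by (auto intro: mult_right_mono)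
    finally show ?thesis .
  qed
  have ss: "(\<Sum>u\<in>Qs - set Z. gn f u Z) \<le> cost c Qs * f (set Z) / B + f (set W)"
  proof -
    have "(\<Sum>u\<in>Qs - set Z. gn f u Z) \<le> (\<Sum>u\<in>Qs - set Z. c u * f (set Z) / B + gl f W u)"
    proof (rule sum_mono)
      fix u assume u: "u \<in> Qs - set Z"
      then have "u \<in> D - set Z" using D Q by (auto simp: Qs_def)
      then show "gn f u Z \<le> c u * f (set Z) / B + gl f W u" using bZ by auto
    qed
    also have "\<dots> = cost c (Qs - set Z) * f (set Z) / B + (\<Sum>u\<in>Qs - set Z. gl f W u)"
      by (simp add: sum.distrib cost_def sum_distrib_right sum_divide_distrib)
    also have "\<dots> \<le> cost c Qs * f (set Z) / B + f (set W)"
    proof -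
      have "cost c (Qs - set Z) \<le> cost c Qs"
        by (rule cost_mono) (use fQb cpos Q in \<open>auto simp: Qs_def intro: less_imp_le\<close>)
      then have "cost c (Qs - set Z) * f (set Z) \<le> cost c Qs * f (set Z)" using fZ0 by (simp add: mult_right_mono)
      then have "cost c (Qs - set Z) * f (set Z) / B \<le> cost c Qs * f (set Z) / B" using Bpos by (simp add: divide_right_mono)
      moreover have "(\<Sum>u\<in>Qs - set Z. gl f W u) \<le> f (set W)"
        using gl_sum_le[OF chW dW, of "Qs - set Z"] fQb f0 by simp
      ultimately show ?thesis by linarith
    qed
    finally show ?thesis .
  qed
  have costQ: "cost c Q = cost c Qs + cost c Qb"
  proof -
    have "Q = Qs \<union> Qb" by (auto simp: Qb_def Qs_def)
    moreover have "Qs \<inter> Qb = {}" by (auto simp: Qb_def Qs_def)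
    ultimately show ?thesis using cost_union_disj[OF fQb(2) fQb(1), of c] by metis
  qed
  have cQb: "real (card Qb) * (B / 2) \<le> cost c Qb"
  proof -
    have "(\<Sum>u\<in>Qb. B / 2) \<le> (\<Sum>u\<in>Qb. c u)" by (rule sum_mono) (auto simp: Qb_def)
    then show ?thesis by (simp add: cost_def)
  qed
  define k where "k = real (card Qb)"
  define r where "r = cost c Qs / B"
  have "0 \<le> cost c Qs" using cost_nonneg[of Qs c] cpos Q by (force simp: Qs_def intro: less_imp_le)
  then have r0: "0 \<le> r" unfolding r_def using Bpos by simp
  have r1: "r \<le> 1 - k / 2"
  proof -
    have "cost c Qs + k * (B / 2) \<le> B" unfolding k_def using costQ cQb Q by linarith
    then have "cost c Qs \<le> B * (1 - k / 2)" by (simp add: algebra_simps)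
    then show ?thesis unfolding r_def using Bpos by (simp add: divide_le_eq mult.commute)
  qed
  have e1: "cost c Qs * f (set Z) / B = r * f (set Z)" by (simp add: r_def)
  have "f (Q \<union> set Z) \<le> f (set Z) + r * f (set Z) + f (set W) + k * \<Gamma>"
    using A sum_split sb ss e1 by (simp add: Un_commute k_def)
  also have "\<dots> = (1 + r) * f (set Z) + f (set W) + k * \<Gamma>" by (simp add: algebra_simps)
  also have "\<dots> \<le> (1 + r) * (3 * \<Gamma>) + 3 * \<Gamma> + k * \<Gamma>"
  proof -
    have "(1 + r) * f (set Z) \<le> (1 + r) * (3 * \<Gamma>)" by (rule mult_left_mono) (use fZ r0 in auto)
    then show ?thesis using fW by linarith
  qed
  also have "\<dots> \<le> 9 * \<Gamma>"
  proof -
    have a: "r * \<Gamma> \<le> (1 - k / 2) * \<Gamma>" using r1 G0 by (simp add: mult_right_mono)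
    have b: "0 \<le> k * \<Gamma>" using G0 by (simp add: k_def)
    have c: "(1 - k / 2) * \<Gamma> = \<Gamma> - (k * \<Gamma>) / 2" by (simp add: algebra_simps)
    have d: "(1 + r) * (3 * \<Gamma>) + 3 * \<Gamma> + k * \<Gamma> = 6 * \<Gamma> + 3 * (r * \<Gamma>) + k * \<Gamma>" by (simp add: algebra_simps)
    show ?thesis unfolding d using a b c by linarith
  qed
  finally show ?thesis .
qed

end


context sfun
begin

lemma LA_thm:
  assumes dv: "distinct vs" and Vv: "set vs = V" and ne: "vs \<noteq> []" and cB: "\<forall>e\<in>V. c e \<le> B"
  shows "fst (LA f c B vs) \<subseteq> V \<and> cost c (fst (LA f c B vs)) \<le> B \<and>
         (\<forall>Q. Q \<subseteq> V \<and> cost c Q \<le> B \<longrightarrow> f Q \<le> 18 * f (fst (LA f c B vs))) \<and>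
         (\<forall>u\<in>V. f {u} \<le> f (fst (LA f c B vs)))"
proof -
  define ws where "ws = filter (\<lambda>e. c e \<le> B / 2) vs"
  define st where "st = fold (\<lambda>e st. fst (la_step f c B e st)) ws ([], [])"
  define em where "em = fst (argmaxM (\<lambda>e. qry f {e}) vs)"
  define cands where "cands = [suffix_set c B (fst st), suffix_set c B (snd st), {em}]"
  have LAeq: "fst (LA f c B vs) = fst (argmaxM (qry f) cands)"
    by (simp add: LA_def fst_foldM cands_def st_def em_def ws_def)
  define S' where "S' = fst (argmaxM (qry f) cands)"
  have S'p: "S' \<in> set cands" "\<forall>x\<in>set cands. f x \<le> f S'"
    using argmaxM_props[of cands "qry f"] by (auto simp: cands_def S'_def)
  have emp: "em \<in> V" "\<forall>e\<in>V. f {e} \<le> f {em}"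
    using argmaxM_props[OF ne, of "\<lambda>e. qry f {e}"] Vv by (auto simp: em_def)
  have wsV: "set ws \<subseteq> V" "distinct ws" using Vv dv by (auto simp: ws_def)
  have I0: "Inv {} [] []" by (simp add: Inv_def InvS_def)
  have I: "Inv (set ws) (fst st) (snd st)"
    using inv_fold[OF wsV(2) wsV(1) _ _ I0] by (simp add: st_def)
  have IX: "InvS (set ws) (fst st) (snd st)" and IY: "InvS (set ws) (snd st) (fst st)"
    and dj: "set (fst st) \<inter> set (snd st) = {}" using I by (auto simp: Inv_def)
  have Xp: "distinct (fst st)" "set (fst st) \<subseteq> set ws" "chainP (\<lambda>ys e. c e * f (set ys) / B \<le> gn f e ys) (fst st)"
    using IX by (auto simp: InvS_def)
  have Yp: "distinct (snd st)" "set (snd st) \<subseteq> set ws" "chainP (\<lambda>ys e. c e * f (set ys) / B \<le> gn f e ys) (snd st)"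
    using IY by (auto simp: InvS_def)
  have XV: "set (fst st) \<subseteq> V" and YV: "set (snd st) \<subseteq> V" using Xp Yp wsV by auto
  have Xs: "\<forall>e\<in>set (fst st). c e \<le> B / 2" and Ys: "\<forall>e\<in>set (snd st). c e \<le> B / 2"
    using Xp(2) Yp(2) by (auto simp: ws_def)
  have sX: "suffix_set c B (fst st) \<subseteq> set (fst st) \<and> cost c (suffix_set c B (fst st)) \<le> B \<and> f (set (fst st)) \<le> 3 * f (suffix_set c B (fst st))"
    using suffix_props[OF Xp(3) Xp(1) XV Xs] .
  have sY: "suffix_set c B (snd st) \<subseteq> set (snd st) \<and> cost c (suffix_set c B (snd st)) \<le> B \<and> f (set (snd st)) \<le> 3 * f (suffix_set c B (snd st))"
    using suffix_props[OF Yp(3) Yp(1) YV Ys] .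
  define \<Gamma> where "\<Gamma> = f S'"
  have fX: "f (set (fst st)) \<le> 3 * \<Gamma>" using sX S'p(2) by (force simp: \<Gamma>_def cands_def)
  have fY: "f (set (snd st)) \<le> 3 * \<Gamma>" using sY S'p(2) by (force simp: \<Gamma>_def cands_def)
  have sing: "\<forall>u\<in>V. f {u} \<le> \<Gamma>" using emp S'p(2) by (force simp: \<Gamma>_def cands_def)
  have D: "{u\<in>V. c u \<le> B / 2} \<subseteq> set ws" using Vv by (auto simp: ws_def)
  have chX: "chainP (\<lambda>ys e. 0 \<le> gn f e ys) (fst st)" using chain_nonneg[OF Xp(3) XV] .
  have chY: "chainP (\<lambda>ys e. 0 \<le> gn f e ys) (snd st)" using chain_nonneg[OF Yp(3) YV] .
  have bound: "\<forall>Q. Q \<subseteq> V \<and> cost c Q \<le> B \<longrightarrow> f Q \<le> 18 * \<Gamma>"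
  proof (intro allI impI)
    fix Q assume Q: "Q \<subseteq> V \<and> cost c Q \<le> B"
    have a: "f (Q \<union> set (fst st)) \<le> 9 * \<Gamma>"
      using la_side[OF IX D wsV(1) chY Yp(1) fX fY sing] Q by auto
    have b: "f (Q \<union> set (snd st)) \<le> 9 * \<Gamma>"
      using la_side[OF IY D wsV(1) chX Xp(1) fY fX sing] Q by auto
    have "f Q \<le> f (Q \<union> set (fst st)) + f (Q \<union> set (snd st))"
      using two_sides[of Q "set (fst st)" "set (snd st)"] Q XV YV dj by auto
    then show "f Q \<le> 18 * \<Gamma>" using a b by linarith
  qed
  have subV: "S' \<subseteq> V" using S'p(1) sX sY XV YV emp by (auto simp: cands_def)
  have cS: "cost c S' \<le> B" using S'p(1) sX sY emp cB by (auto simp: cands_def cost_def)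
  show ?thesis using subV cS bound sing LAeq by (simp add: S'_def \<Gamma>_def)
qed

end


definition ok1 :: "('a set \<Rightarrow> real) \<Rightarrow> ('a \<Rightarrow> real) \<Rightarrow> real \<Rightarrow> real \<Rightarrow> 'a \<Rightarrow> 'a list \<Rightarrow> bool" where
  "ok1 f c B th e L = (cost c (insert e (set L)) \<le> B \<and> th * c e \<le> gn f e L)"

definition stp1 where
  "stp1 f c B th e Z Z' W W' =
    (if e \<in> set Z \<union> set W then Z' = Z \<and> W' = W else
    ((Z' = Z @ [e] \<and> W' = W \<and> ok1 f c B th e Z \<and> (ok1 f c B th e W \<longrightarrow> gn f e W \<le> gn f e Z)) \<or>
     (W' = W @ [e] \<and> Z' = Z \<and> ok1 f c B th e W \<and> (ok1 f c B th e Z \<longrightarrow> gn f e Z \<le> gn f e W)) \<or>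
     (Z' = Z \<and> W' = W \<and> \<not> ok1 f c B th e Z \<and> \<not> ok1 f c B th e W)))"

lemma stp1_sym: "stp1 f c B th e Z Z' W W' \<Longrightarrow> stp1 f c B th e W W' Z Z'"
  unfolding stp1_def by (auto split: if_splits)

lemma p1_step_stp1:
  assumes "c e > 0"
  shows "stp1 f c B th e X (fst (fst (p1_step f c B th e (X, Y)))) Y (snd (fst (p1_step f c B th e (X, Y))))"
proof (cases "e \<in> set X \<union> set Y")
  case True
  then show ?thesis by (simp add: p1_step_def stp1_def)
next
  case False
  define gX where "gX = gn f e X"
  define gY where "gY = gn f e Y"
  have okX: "ok1 f c B th e X = (cost c (insert e (set X)) \<le> B \<and> gX / c e \<ge> th)"
    using assms by (simp add: ok1_def gX_def pos_le_divide_eq)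
  have okY: "ok1 f c B th e Y = (cost c (insert e (set Y)) \<le> B \<and> gY / c e \<ge> th)"
    using assms by (simp add: ok1_def gY_def pos_le_divide_eq)
  have cmp: "(gX / c e \<ge> gY / c e) = (gX \<ge> gY)" using assms by (simp add: divide_le_cancel)
  have st: "fst (p1_step f c B th e (X, Y)) =
     (if (cost c (insert e (set X)) \<le> B \<and> gX / c e \<ge> th) \<and> (\<not> (cost c (insert e (set Y)) \<le> B \<and> gY / c e \<ge> th) \<or> gX / c e \<ge> gY / c e) then (X @ [e], Y)
      else if (cost c (insert e (set Y)) \<le> B \<and> gY / c e \<ge> th) then (X, Y @ [e]) else (X, Y))"
    using False by (simp add: p1_step_def Let_def gX_def gY_def gn_def)
  show ?thesis
    unfolding st stp1_def okX okY gX_def[symmetric] gY_def[symmetric]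
    using cmp False by auto
qed

lemma chain_prefix_mono:
  assumes "chainP (\<lambda>ys e. 0 \<le> gn f e ys) (R @ S)"
  shows "f (set R) \<le> f (set (R @ S))"
  using assms
proof (induction S rule: rev_induct)
  case Nil then show ?case by simp
next
  case (snoc e S)
  have "chainP (\<lambda>ys e. 0 \<le> gn f e ys) (R @ S)" "0 \<le> gn f e (R @ S)"
    using snoc.prems chainP_snoc[of _ "R @ S" e] by auto
  then show ?case using snoc.IH by (simp add: gn_def)
qed

locale p1tr = sfun V f c B for V f c B +
  fixes vs :: "'a list" and \<theta> :: "nat \<Rightarrow> real" and Z W :: "nat \<Rightarrow> 'a list"
  assumes dvs: "distinct vs" and Vvs: "set vs = V" and nvs: "vs \<noteq> []"
    and th_nn: "\<And>k. 0 \<le> \<theta> k" and th_anti: "\<And>k. \<theta> (Suc k) \<le> \<theta> k"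
    and Z0: "Z 0 = []" and W0: "W 0 = []"
    and step: "\<And>t. stp1 f c B (\<theta> (t div length vs)) (vs ! (t mod length vs)) (Z t) (Z (Suc t)) (W t) (W (Suc t))"
begin

abbreviation "n \<equiv> length vs"

lemma npos: "0 < n" using nvs by simp

lemma swap: "p1tr V f c B vs \<theta> W Z"
proof -
  have st': "\<And>t. stp1 f c B (\<theta> (t div n)) (vs ! (t mod n)) (W t) (W (Suc t)) (Z t) (Z (Suc t))"
    using stp1_sym[OF step] .
  show ?thesis
    by (rule p1tr.intro[OF sfun_axioms p1tr_axioms.intro]) (fact dvs Vvs nvs th_nn th_anti W0 Z0 st')+
qed

lemma ev_V: "vs ! (t mod n) \<in> V"
  using npos Vvs by auto

lemma th_mono: "k \<le> k' \<Longrightarrow> \<theta> k' \<le> \<theta> k"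
  using lift_Suc_antimono_le[of \<theta>] th_anti by blast

lemma step_cases:
  fixes t
  defines "e \<equiv> vs ! (t mod n)" and "th \<equiv> \<theta> (t div n)"
  obtains (skip) "e \<in> set (Z t) \<union> set (W t)" "Z (Suc t) = Z t" "W (Suc t) = W t"
  | (addZ) "e \<notin> set (Z t) \<union> set (W t)" "Z (Suc t) = Z t @ [e]" "W (Suc t) = W t"
      "ok1 f c B th e (Z t)" "ok1 f c B th e (W t) \<longrightarrow> gn f e (W t) \<le> gn f e (Z t)"
  | (addW) "e \<notin> set (Z t) \<union> set (W t)" "W (Suc t) = W t @ [e]" "Z (Suc t) = Z t"
      "ok1 f c B th e (W t)" "ok1 f c B th e (Z t) \<longrightarrow> gn f e (Z t) \<le> gn f e (W t)"
  | (rej) "e \<notin> set (Z t) \<union> set (W t)" "Z (Suc t) = Z t" "W (Suc t) = W t"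
      "\<not> ok1 f c B th e (Z t)" "\<not> ok1 f c B th e (W t)"
proof -
  have s: "stp1 f c B th e (Z t) (Z (Suc t)) (W t) (W (Suc t))" using step[of t] by (simp add: e_def th_def)
  show ?thesis
  proof (cases "e \<in> set (Z t) \<union> set (W t)")
    case True then show ?thesis using s that(1) True by (simp add: stp1_def)
  next
    case False
    then have "(Z (Suc t) = Z t @ [e] \<and> W (Suc t) = W t \<and> ok1 f c B th e (Z t) \<and> (ok1 f c B th e (W t) \<longrightarrow> gn f e (W t) \<le> gn f e (Z t))) \<or>
     (W (Suc t) = W t @ [e] \<and> Z (Suc t) = Z t \<and> ok1 f c B th e (W t) \<and> (ok1 f c B th e (Z t) \<longrightarrow> gn f e (Z t) \<le> gn f e (W t))) \<or>
     (Z (Suc t) = Z t \<and> W (Suc t) = W t \<and> \<not> ok1 f c B th e (Z t) \<and> \<not> ok1 f c B th e (W t))"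
      using s by (simp add: stp1_def)
    then show ?thesis using that(2-4) False by blast
  qed
qed

lemma prefixZ: "t \<le> t' \<Longrightarrow> \<exists>s. Z t' = Z t @ s"
proof (induction t' rule: dec_induct)
  case base then show ?case by simp
next
  case (step m)
  then obtain s where s: "Z m = Z t @ s" by blast
  show ?case by (cases m rule: step_cases) (use s in auto)
qed

lemma inv:
  "distinct (Z t) \<and> distinct (W t) \<and> set (Z t) \<inter> set (W t) = {} \<and> set (Z t) \<subseteq> V \<and> set (W t) \<subseteq> V \<and>
   cost c (set (Z t)) \<le> B \<and> cost c (set (W t)) \<le> B \<and>
   chainP (\<lambda>ys e. 0 \<le> gn f e ys) (Z t) \<and> chainP (\<lambda>ys e. 0 \<le> gn f e ys) (W t) \<and>
   \<theta> (t div n) * cost c (set (Z t)) \<le> f (set (Z t)) \<and> \<theta> (t div n) * cost c (set (W t)) \<le> f (set (W t))"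
proof (induction t)
  case 0 then show ?case using Bpos by (simp add: Z0 W0 f0)
next
  case (Suc t)
  define e where "e = vs ! (t mod n)"
  define th where "th = \<theta> (t div n)"
  have eV: "e \<in> V" using ev_V by (simp add: e_def)
  have ce: "0 < c e" using cpos eV by simp
  have thn: "\<theta> (Suc t div n) \<le> th" unfolding th_def by (rule th_mono) (simp add: div_le_mono)
  have th0: "0 \<le> \<theta> (Suc t div n)" by (rule th_nn)
  have cZ: "0 \<le> cost c (set (Z t))" and cW: "0 \<le> cost c (set (W t))"
    using Suc.IH cost_nonneg[of "set (Z t)" c] cost_nonneg[of "set (W t)" c] cpos by (meson less_imp_le subsetD)+
  have J1: "\<theta> (Suc t div n) * cost c (set (Z t)) \<le> th * cost c (set (Z t))" using thn cZ by (simp add: mult_right_mono)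
  have J2: "\<theta> (Suc t div n) * cost c (set (W t)) \<le> th * cost c (set (W t))" using thn cW by (simp add: mult_right_mono)
  have IH: "th * cost c (set (Z t)) \<le> f (set (Z t))" "th * cost c (set (W t)) \<le> f (set (W t))"
    using Suc.IH by (auto simp: th_def)
  show ?case
  proof (cases t rule: step_cases)
    case skip then show ?thesis using Suc.IH J1 J2 IH by auto
  next
    case addZ
    note a = addZ[folded e_def th_def]
    have ok: "cost c (insert e (set (Z t))) \<le> B" "th * c e \<le> gn f e (Z t)" using a by (auto simp: ok1_def)
    have cst: "cost c (set (Z t @ [e])) = c e + cost c (set (Z t))" using a by (simp add: cost_insert)
    have "0 \<le> th * c e" using ce th_nn by (simp add: th_def)
    then have g0: "0 \<le> gn f e (Z t)" using ok by linarith
    have nnc: "0 \<le> cost c (set (Z t @ [e]))" using cst cZ ce by linarith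
    have "\<theta> (Suc t div n) * cost c (set (Z t @ [e])) \<le> th * cost c (set (Z t @ [e]))"
      using mult_right_mono[OF thn nnc] .
    also have "\<dots> = th * c e + th * cost c (set (Z t))" unfolding cst by (simp add: algebra_simps)
    also have "\<dots> \<le> gn f e (Z t) + f (set (Z t))" using ok IH by linarith
    also have "\<dots> = f (set (Z t @ [e]))" by (simp add: gn_def)
    finally have J: "\<theta> (Suc t div n) * cost c (set (Z t @ [e])) \<le> f (set (Z t @ [e]))" .
    show ?thesis using Suc.IH a ok g0 J J2 eV IH by (auto simp: chainP_snoc)
  next
    case addW
    note a = addW[folded e_def th_def]
    have ok: "cost c (insert e (set (W t))) \<le> B" "th * c e \<le> gn f e (W t)" using a by (auto simp: ok1_def)
    have cst: "cost c (set (W t @ [e])) = c e + cost c (set (W t))" using a by (simp add: cost_insert)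
    have "0 \<le> th * c e" using ce th_nn by (simp add: th_def)
    then have g0: "0 \<le> gn f e (W t)" using ok by linarith
    have nnc: "0 \<le> cost c (set (W t @ [e]))" using cst cW ce by linarith
    have "\<theta> (Suc t div n) * cost c (set (W t @ [e])) \<le> th * cost c (set (W t @ [e]))"
      using mult_right_mono[OF thn nnc] .
    also have "\<dots> = th * c e + th * cost c (set (W t))" unfolding cst by (simp add: algebra_simps)
    also have "\<dots> \<le> gn f e (W t) + f (set (W t))" using ok IH by linarith
    also have "\<dots> = f (set (W t @ [e]))" by (simp add: gn_def)
    finally have J: "\<theta> (Suc t div n) * cost c (set (W t @ [e])) \<le> f (set (W t @ [e]))" .
    show ?thesis using Suc.IH a ok g0 J J1 eV IH by (auto simp: chainP_snoc)
  next
    case rej then show ?thesis using Suc.IH J1 J2 IH by auto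
  qed
qed

end


context p1tr
begin

lemma witnessZ:
  "u \<in> set (Z t) \<Longrightarrow> \<exists>t2<t. vs ! (t2 mod n) = u \<and> u \<notin> set (Z t2) \<union> set (W t2) \<and>
     Z (Suc t2) = Z t2 @ [u] \<and> W (Suc t2) = W t2 \<and> ok1 f c B (\<theta> (t2 div n)) u (Z t2) \<and>
     (ok1 f c B (\<theta> (t2 div n)) u (W t2) \<longrightarrow> gn f u (W t2) \<le> gn f u (Z t2))"
proof (induction t)
  case 0 then show ?case by (simp add: Z0)
next
  case (Suc t)
  show ?case
  proof (cases "u \<in> set (Z t)")
    case True
    then show ?thesis using Suc.IH less_SucI by blast
  next
    case False
    show ?thesis
    proof (cases t rule: step_cases)
      case skip then show ?thesis using False Suc.prems by simp
    next
      case addZ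
      then have "u = vs ! (t mod n)" using False Suc.prems by simp
      then show ?thesis using addZ by blast
    next
      case addW then show ?thesis using False Suc.prems by simp
    next
      case rej then show ?thesis using False Suc.prems by simp
    qed
  qed
qed

lemma witnessW:
  "u \<in> set (W t) \<Longrightarrow> \<exists>t2<t. vs ! (t2 mod n) = u \<and> u \<notin> set (W t2) \<union> set (Z t2) \<and>
     W (Suc t2) = W t2 @ [u] \<and> Z (Suc t2) = Z t2 \<and> ok1 f c B (\<theta> (t2 div n)) u (W t2) \<and>
     (ok1 f c B (\<theta> (t2 div n)) u (Z t2) \<longrightarrow> gn f u (Z t2) \<le> gn f u (W t2))"
proof -
  assume a: "u \<in> set (W t)"
  interpret sw: p1tr V f c B vs \<theta> W Z by (rule swap)
  show ?thesis using sw.witnessZ[OF a] .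
qed

lemma prefixW: "t \<le> t' \<Longrightarrow> \<exists>s. W t' = W t @ s"
proof -
  assume a: "t \<le> t'"
  interpret sw: p1tr V f c B vs \<theta> W Z by (rule swap)
  show ?thesis using sw.prefixZ[OF a] .
qed

lemma key:
  assumes t1: "Suc k * n \<le> t1" and uV: "u \<in> V" and uZ: "u \<notin> set (Z t1)"
    and cst: "cost c (set (Z t1)) + c u \<le> B"
  shows "gn f u (Z t1) \<le> \<theta> k * c u + gl f (W t1) u"
proof -
  obtain i where i: "i < n" "vs ! i = u" using uV Vvs by (metis in_set_conv_nth)
  define t0 where "t0 = k * n + i"
  have t0m: "t0 mod n = i" "t0 div n = k" using i by (auto simp: t0_def div_add1_eq)
  have t0t1: "Suc t0 \<le> t1" using t1 i by (simp add: t0_def)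
  have I1: "distinct (Z t1)" "set (Z t1) \<subseteq> V" "distinct (W t1)" "chainP (\<lambda>ys e. 0 \<le> gn f e ys) (W t1)"
    using inv[of t1] by auto
  have cu: "0 < c u" using cpos uV by simp
  have gl0: "0 \<le> gl f (W t1) u" by (rule gl_nonneg[OF I1(4) I1(3)])
  have thc: "0 \<le> \<theta> k * c u" using th_nn cu by simp
  have early: "\<And>t. t \<le> t1 \<Longrightarrow> set (Z t) \<subseteq> set (Z t1) \<and> u \<notin> set (Z t) \<and>
        gn f u (Z t1) \<le> gn f u (Z t) \<and> cost c (insert u (set (Z t))) \<le> B"
  proof -
    fix t assume tt: "t \<le> t1"
    obtain s where s: "Z t1 = Z t @ s" using prefixZ[OF tt] by blast
    have sub: "set (Z t) \<subseteq> set (Z t1)" using s by auto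
    have uZt: "u \<notin> set (Z t)" using sub uZ by auto
    have g: "gn f u (Z t1) \<le> gn f u (Z t)" by (rule gn_anti) (use sub I1 uV uZ in auto)
    have "cost c (set (Z t)) \<le> cost c (set (Z t1))"
      by (rule cost_mono) (use sub I1 cpos in \<open>auto intro: less_imp_le\<close>)
    then have "cost c (insert u (set (Z t))) \<le> B" using cst uZt by (simp add: cost_insert)
    then show "set (Z t) \<subseteq> set (Z t1) \<and> u \<notin> set (Z t) \<and> gn f u (Z t1) \<le> gn f u (Z t) \<and> cost c (insert u (set (Z t))) \<le> B"
      using sub uZt g by blast
  qed
  consider (inZ) "u \<in> set (Z (Suc t0))" | (inW) "u \<in> set (W (Suc t0))" | (none) "u \<notin> set (Z (Suc t0))" "u \<notin> set (W (Suc t0))"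
    by blast
  then show ?thesis
  proof cases
    case inZ then show ?thesis using early[OF t0t1] by blast
  next
    case inW
    obtain t2 where t2: "t2 < Suc t0" "u \<notin> set (W t2) \<union> set (Z t2)" "W (Suc t2) = W t2 @ [u]"
       "ok1 f c B (\<theta> (t2 div n)) u (W t2)"
       "ok1 f c B (\<theta> (t2 div n)) u (Z t2) \<longrightarrow> gn f u (Z t2) \<le> gn f u (W t2)"
      using witnessW[OF inW] by blast
    have t2t1: "t2 \<le> t1" "Suc t2 \<le> t1" using t2(1) t0t1 by auto
    have e2: "gn f u (Z t1) \<le> gn f u (Z t2)" "cost c (insert u (set (Z t2))) \<le> B" using early[OF t2t1(1)] by auto
    have "gn f u (Z t2) \<le> gn f u (W t2)"
    proof (cases "ok1 f c B (\<theta> (t2 div n)) u (Z t2)")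
      case True then show ?thesis using t2 by blast
    next
      case False
      then have "gn f u (Z t2) < \<theta> (t2 div n) * c u" using e2 by (auto simp: ok1_def)
      moreover have "\<theta> (t2 div n) * c u \<le> gn f u (W t2)" using t2(4) by (simp add: ok1_def)
      ultimately show ?thesis by linarith
    qed
    moreover have "gl f (W t1) u = gn f u (W t2)"
    proof -
      obtain s where s: "W t1 = W (Suc t2) @ s" using prefixW[OF t2t1(2)] by blast
      have "gl f (W t1) u = gl f (W (Suc t2)) u" unfolding s by (rule gl_append_old) (simp add: t2(3))
      also have "\<dots> = gn f u (W t2)" unfolding t2(3) by (rule gl_snoc_new) (use t2(2) in auto)
      finally show ?thesis .
    qed
    ultimately show ?thesis using e2 thc by linarith
  next
    case none
    have e0: "gn f u (Z t1) \<le> gn f u (Z t0)" "cost c (insert u (set (Z t0))) \<le> B" using early[of t0] t0t1 by auto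
    show ?thesis
    proof (cases t0 rule: step_cases)
      case skip then show ?thesis using none t0m i by auto
    next
      case addZ then show ?thesis using none t0m i by auto
    next
      case addW then show ?thesis using none t0m i by auto
    next
      case rej
      then have "\<not> ok1 f c B (\<theta> k) u (Z t0)" using t0m i by simp
      then have "gn f u (Z t0) < \<theta> k * c u" using e0 by (auto simp: ok1_def)
      then show ?thesis using e0 gl0 by linarith
    qed
  qed
qed

end


context p1tr
begin

lemma side_sum:
  assumes t1: "Suc k * n \<le> t1" and P: "finite P" "P \<subseteq> V" and cst: "\<forall>u\<in>P. cost c (set (Z t1)) + c u \<le> B"
  shows "(\<Sum>u\<in>P - set (Z t1). gn f u (Z t1)) \<le> \<theta> k * cost c P + f (set (W t1))"
proof -
  have I1: "distinct (W t1)" "chainP (\<lambda>ys e. 0 \<le> gn f e ys) (W t1)" using inv[of t1] by auto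
  have "(\<Sum>u\<in>P - set (Z t1). gn f u (Z t1)) \<le> (\<Sum>u\<in>P - set (Z t1). \<theta> k * c u + gl f (W t1) u)"
    by (rule sum_mono) (rule key[OF t1], use P cst in auto)
  also have "\<dots> = \<theta> k * cost c (P - set (Z t1)) + (\<Sum>u\<in>P - set (Z t1). gl f (W t1) u)"
    by (simp add: sum.distrib cost_def sum_distrib_left)
  also have "\<dots> \<le> \<theta> k * cost c P + f (set (W t1))"
  proof -
    have "cost c (P - set (Z t1)) \<le> cost c P"
      by (rule cost_mono) (use P cpos in \<open>auto intro: less_imp_le\<close>)
    then have "\<theta> k * cost c (P - set (Z t1)) \<le> \<theta> k * cost c P" using th_nn by (simp add: mult_left_mono)
    moreover have "(\<Sum>u\<in>P - set (Z t1). gl f (W t1) u) \<le> f (set (W t1))"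
      using gl_sum_le[OF I1(2) I1(1), of "P - set (Z t1)"] P f0 by simp
    ultimately show ?thesis by linarith
  qed
  finally show ?thesis .
qed

lemma fW_mono: "t \<le> t' \<Longrightarrow> f (set (W t)) \<le> f (set (W t'))"
proof -
  assume a: "t \<le> t'"
  obtain s where s: "W t' = W t @ s" using prefixW[OF a] by blast
  have "chainP (\<lambda>ys e. 0 \<le> gn f e ys) (W t @ s)" using inv[of t'] s by simp
  then show ?thesis using chain_prefix_mono s by metis
qed

lemma prefix_witness:
  assumes i: "i < length (Z T)"
  shows "\<exists>t1<T. Z t1 = take i (Z T) \<and>
     \<theta> (t1 div n) * cost c (set (take (Suc i) (Z T))) \<le> f (set (take (Suc i) (Z T)))"
proof -
  define u where "u = Z T ! i"
  have uZ: "u \<in> set (Z T)" using i by (simp add: u_def)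
  obtain t2 where t2: "t2 < T" "u \<notin> set (Z t2) \<union> set (W t2)" "Z (Suc t2) = Z t2 @ [u]"
     "ok1 f c B (\<theta> (t2 div n)) u (Z t2)"
    using witnessZ[OF uZ] by blast
  obtain s where s: "Z T = Z (Suc t2) @ s" using prefixZ[of "Suc t2" T] t2(1) by auto
  have ZT: "Z T = Z t2 @ u # s" using s t2(3) by simp
  have dZ: "distinct (Z T)" using inv[of T] by simp
  have len: "length (Z t2) < length (Z T)" using ZT by simp
  have "Z T ! length (Z t2) = u" using ZT by simp
  then have "Z T ! length (Z t2) = Z T ! i" by (simp add: u_def)
  then have li: "length (Z t2) = i" using nth_eq_iff_index_eq[OF dZ len i] by simp
  have tk: "take i (Z T) = Z t2" using ZT li by simp
  have tk1: "take (Suc i) (Z T) = Z t2 @ [u]" using ZT li by simp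
  have J: "\<theta> (t2 div n) * cost c (set (Z t2)) \<le> f (set (Z t2))" using inv[of t2] by simp
  have ok: "\<theta> (t2 div n) * c u \<le> gn f u (Z t2)" using t2(4) by (simp add: ok1_def)
  have "\<theta> (t2 div n) * cost c (set (Z t2 @ [u])) = \<theta> (t2 div n) * c u + \<theta> (t2 div n) * cost c (set (Z t2))"
    using t2(2) by (simp add: cost_insert algebra_simps)
  also have "\<dots> \<le> f (set (Z t2 @ [u]))" using J ok by (simp add: gn_def)
  finally show ?thesis using tk tk1 t2(1) by metis
qed

end


lemma ar1:
  fixes e x F b q :: real
  assumes "0 < e" "e \<le> 1/14" "0 \<le> x" "0 \<le> F" "x*(1-e)*b \<le> (1+e)*F" "0 \<le> q" "q \<le> b"
  shows "x*q \<le> (1+7*e)*F"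
proof -
  have q: "x*q \<le> x*b" using assms by (simp add: mult_left_mono)
  have "0 \<le> e*(5-7*e)*F" using assms by simp
  moreover have "(1+7*e)*(1-e)*F - (1+e)*F = e*(5-7*e)*F" by (simp add: algebra_simps)
  ultimately have a: "(1+e)*F \<le> (1+7*e)*(1-e)*F" by linarith
  have "(x*b)*(1-e) \<le> ((1+7*e)*F)*(1-e)" using a assms(5) by (simp add: algebra_simps)
  then have "x*b \<le> (1+7*e)*F" using assms(1,2) by (simp add: mult_le_cancel_right_pos)
  then show ?thesis using q by linarith
qed

lemma ar2:
  fixes e x F B q :: real
  assumes "0 < e" "e \<le> 1/14" "0 \<le> x" "0 \<le> F" "0 < B" "x*(1-e)*((1-e)*B) \<le> (1+e)*F" "0 \<le> q" "q \<le> e*B"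
  shows "x*q \<le> 7*e*F"
proof -
  have q: "x*q \<le> x*(e*B)" using assms by (simp add: mult_left_mono)
  have "0 \<le> e*e" by simp
  then have "0 \<le> 6 - 15*e + 7*(e*e)" using assms by linarith
  then have "0 \<le> (6 - 15*e + 7*(e*e))*F" using assms by simp
  moreover have "7*((1-e)*(1-e))*F - (1+e)*F = (6 - 15*e + 7*(e*e))*F" by (simp add: algebra_simps)
  ultimately have a: "(1+e)*F \<le> (7*F)*((1-e)*(1-e))" by (simp add: algebra_simps)
  have "(x*B)*((1-e)*(1-e)) \<le> (7*F)*((1-e)*(1-e))" using a assms(6) by (simp add: algebra_simps)
  moreover have "0 < (1-e)*(1-e)" using assms by simp
  ultimately have "x*B \<le> 7*F" by (simp add: mult_le_cancel_right_pos)
  then have "e*(x*B) \<le> e*(7*F)" using assms by (simp add: mult_left_mono)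
  then show ?thesis using q by (simp add: algebra_simps)
qed

lemma prefix_set_props:
  fixes c :: "'a \<Rightarrow> real" and xs :: "'a list" and bd :: real
  assumes "0 \<le> bd"
  defines "i \<equiv> (GREATEST i. i \<le> length xs \<and> cost c (set (take i xs)) \<le> bd)"
  shows "prefix_set c bd xs = set (take i xs) \<and> i \<le> length xs \<and> cost c (set (take i xs)) \<le> bd \<and>
         (i < length xs \<longrightarrow> bd < cost c (set (take (Suc i) xs)))"
proof -
  define P where "P = (\<lambda>i. i \<le> length xs \<and> cost c (set (take i xs)) \<le> bd)"
  have P0: "P 0" using assms by (simp add: P_def)
  have bnd: "\<forall>y. P y \<longrightarrow> y \<le> length xs" by (simp add: P_def)
  have iP: "i = Greatest P" by (simp add: i_def P_def)
  have Pi: "P i" unfolding iP by (rule GreatestI_nat[of P 0 "length xs", OF P0]) (use bnd in auto)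
  have imax: "\<And>y. P y \<Longrightarrow> y \<le> i" unfolding iP using Greatest_le_nat[of P _ "length xs"] bnd by blast
  have "i < length xs \<longrightarrow> bd < cost c (set (take (Suc i) xs))"
  proof
    assume "i < length xs"
    then have "\<not> P (Suc i) \<longrightarrow> bd < cost c (set (take (Suc i) xs))" by (auto simp: P_def)
    moreover have "\<not> P (Suc i)" using imax by fastforce
    ultimately show "bd < cost c (set (take (Suc i) xs))" by blast
  qed
  then show ?thesis using Pi by (simp add: prefix_set_def i_def P_def)
qed

locale dside = p1tr V f c B vs \<theta> Z W for V f c B vs \<theta> Z W +
  fixes \<epsilon>' \<Gamma> \<theta>0 K FS Q o1 b l
  assumes eps: "0 < \<epsilon>'" "\<epsilon>' \<le> 1/14"
    and thdef: "\<And>k. \<theta> k = \<theta>0 * (1 - \<epsilon>') ^ k" and th0: "\<theta>0 = 19 * \<Gamma> / (6 * \<epsilon>' * B)" and Gpos: "0 < \<Gamma>"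
    and K1: "1 \<le> K" and thK: "\<theta> (K - 1) < \<Gamma> / (6 * B)"
    and FS: "\<Gamma> \<le> FS" and opt19: "f Q \<le> 19 * \<Gamma>" and sing: "f {o1} \<le> \<Gamma>"
    and candW: "f (set (W (K * length vs))) \<le> FS"
    and candP: "\<And>e. e \<in> V \<Longrightarrow> cost c (insert e (prefix_set c (\<epsilon>' * B * (1 + \<epsilon>') ^ l) (Z (K * length vs)))) \<le> B
        \<Longrightarrow> f (insert e (prefix_set c (\<epsilon>' * B * (1 + \<epsilon>') ^ l) (Z (K * length vs)))) \<le> FS"
    and Q: "Q \<subseteq> V" "o1 \<in> Q" "cost c Q \<le> B" "\<And>u. u \<in> Q \<Longrightarrow> c u \<le> c o1"
    and bl: "\<epsilon>' * B * (1 + \<epsilon>') ^ l \<le> b" "b < \<epsilon>' * B * (1 + \<epsilon>') ^ l * (1 + \<epsilon>')"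
    and bcase: "(c o1 \<le> (1 - \<epsilon>') * B \<and> b = B - c o1) \<or> ((1 - \<epsilon>') * B < c o1 \<and> b = (1 - \<epsilon>') * B)"
begin

lemma gen_bound:
  assumes "A \<subseteq> V"
  shows "f (Q \<union> A) \<le> f (insert o1 A) + (\<Sum>u\<in>(Q - {o1}) - A. f (insert u A) - f A)"
proof -
  have finQ: "finite Q" using Q finV finite_subset by blast
  have A': "insert o1 A \<subseteq> V" using assms Q by auto
  have "f (insert o1 A \<union> Q) \<le> f (insert o1 A) + (\<Sum>u\<in>Q - insert o1 A. f (insert u (insert o1 A)) - f (insert o1 A))"
    using union_marg_sum[OF finQ Q(1) A'] .
  also have "(\<Sum>u\<in>Q - insert o1 A. f (insert u (insert o1 A)) - f (insert o1 A)) \<le> (\<Sum>u\<in>Q - insert o1 A. f (insert u A) - f A)"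
    by (rule sum_mono, rule marg_anti) (use A' Q in auto)
  also have "Q - insert o1 A = (Q - {o1}) - A" by auto
  also have "insert o1 A \<union> Q = Q \<union> A" using Q by auto
  finally show ?thesis by simp
qed

lemma side_result:
  "f (Q \<union> prefix_set c (\<epsilon>' * B * (1 + \<epsilon>') ^ l) (Z (K * n))) \<le> (3 + 7 * \<epsilon>') * FS \<or> f Q \<le> 6 * FS"
proof -
  define \<beta> where "\<beta> = \<epsilon>' * B * (1 + \<epsilon>') ^ l"
  define T where "T = K * n"
  define ZF where "ZF = Z T"
  define i where "i = (GREATEST i. i \<le> length ZF \<and> cost c (set (take i ZF)) \<le> \<beta>)"
  have b0: "0 \<le> \<beta>" using eps Bpos by (simp add: \<beta>_def)
  have b1: "\<epsilon>' * B \<le> \<beta>" using eps Bpos by (simp add: \<beta>_def)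
  have pp: "prefix_set c \<beta> ZF = set (take i ZF)" "i \<le> length ZF" "cost c (set (take i ZF)) \<le> \<beta>"
     "i < length ZF \<longrightarrow> \<beta> < cost c (set (take (Suc i) ZF))"
    using prefix_set_props[OF b0, of c ZF] by (simp_all add: i_def)
  define A where "A = set (take i ZF)"
  have invT: "distinct ZF" "set ZF \<subseteq> V" "cost c (set ZF) \<le> B" using inv[of T] by (auto simp: ZF_def)
  have AV: "A \<subseteq> V" using invT by (auto simp: A_def dest: in_set_takeD)
  have FS0: "0 < FS" using FS Gpos by linarith
  have candA: "\<And>e. e \<in> V \<Longrightarrow> cost c (insert e A) \<le> B \<Longrightarrow> f (insert e A) \<le> FS"
    using candP pp(1) by (simp add: A_def \<beta>_def ZF_def T_def)
  have finQ: "finite Q" using Q finV finite_subset by blast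
  define Q' where "Q' = Q - {o1}"
  define q where "q = cost c Q'"
  have Q'V: "Q' \<subseteq> V" "finite Q'" using Q finQ by (auto simp: Q'_def)
  have cQ: "cost c Q = c o1 + q"
  proof -
    have e: "Q = insert o1 Q'" using Q by (auto simp: Q'_def)
    have "cost c (insert o1 Q') = c o1 + cost c Q'" by (rule cost_insert) (use Q'V in \<open>auto simp: Q'_def\<close>)
    then show ?thesis using e by (simp add: q_def)
  qed
  have q0: "0 \<le> q" unfolding q_def by (rule cost_nonneg) (use Q'V cpos in \<open>auto intro: less_imp_le\<close>)
  have co1: "0 < c o1" using cpos Q by auto
  have cA: "cost c A \<le> b" using pp(3) bl(1) by (simp add: A_def \<beta>_def)
  have cuB: "\<forall>u\<in>Q'. cost c A + c u \<le> B"
  proof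
    fix u assume u: "u \<in> Q'"
    have cuq: "c u \<le> q" unfolding q_def by (rule cost_le_elem) (use u Q'V cpos in \<open>auto intro: less_imp_le\<close>)
    have "c u \<le> c o1" using Q u by (auto simp: Q'_def)
    then show "cost c A + c u \<le> B" using bcase cA cuq cQ Q(3) eps Bpos by (auto simp: algebra_simps)
  qed
  have fA: "f A \<le> FS"
  proof (cases "A = {}")
    case True then show ?thesis using f0 FS0 by simp
  next
    case False
    then obtain e where e: "e \<in> A" by blast
    have eB: "0 < \<epsilon>' * B" using eps Bpos by simp
    have "cost c A \<le> B" using cA bcase co1 eB by (auto simp: algebra_simps)
    moreover have "e \<in> V" using e AV by auto
    ultimately show ?thesis using candA[of e] e by (simp add: insert_absorb)
  qed
  have fo1: "(c o1 \<le> (1 - \<epsilon>') * B \<and> b = B - c o1 \<longrightarrow> f (insert o1 A) \<le> FS) \<and> f (insert o1 A) \<le> 2 * FS"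
  proof -
    have "f (insert o1 A) \<le> f A + f {o1}" using subadd[of A "{o1}"] AV Q by auto
    then have a: "f (insert o1 A) \<le> 2 * FS" using fA sing FS by linarith
    have "c o1 \<le> (1 - \<epsilon>') * B \<and> b = B - c o1 \<longrightarrow> f (insert o1 A) \<le> FS"
    proof
      assume h: "c o1 \<le> (1 - \<epsilon>') * B \<and> b = B - c o1"
      have "cost c (insert o1 A) \<le> cost c A + c o1"
        using AV finV finite_subset[OF AV finV] co1
        by (cases "o1 \<in> A") (auto simp: insert_absorb cost_insert)
      then have "cost c (insert o1 A) \<le> B" using h cA by linarith
      then show "f (insert o1 A) \<le> FS" using candA Q by auto
    qed
    then show ?thesis using a by blast
  qed
  have main: "f (Q \<union> A) \<le> f (insert o1 A) + (\<Sum>u\<in>Q' - A. f (insert u A) - f A)"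
    using gen_bound[OF AV] by (simp add: Q'_def)
  have qc: "(c o1 \<le> (1 - \<epsilon>') * B \<and> b = B - c o1 \<longrightarrow> q \<le> b) \<and> ((1 - \<epsilon>') * B < c o1 \<and> b = (1 - \<epsilon>') * B \<longrightarrow> q \<le> \<epsilon>' * B)"
    using cQ Q(3) by (auto simp: algebra_simps)
  have "f (Q \<union> A) \<le> (3 + 7 * \<epsilon>') * FS \<or> f Q \<le> 6 * FS"
  proof (cases "i = length ZF")
    case True
    then have AZ: "A = set (Z T)" by (simp add: A_def ZF_def)
    have t: "Suc (K - 1) * n \<le> T" using K1 by (simp add: T_def)
    have s: "(\<Sum>u\<in>Q' - A. f (insert u A) - f A) \<le> \<theta> (K - 1) * q + f (set (W T))"
      using side_sum[OF t Q'V(2) Q'V(1)] cuB unfolding AZ by (simp add: gn_def q_def)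
    have th0': "0 \<le> \<theta> (K - 1)" by (rule th_nn)
    have r: "\<theta> (K - 1) * q \<le> \<Gamma> / (6 * B) * q" using mult_right_mono[OF less_imp_le[OF thK] q0] .
    have "f (Q \<union> A) \<le> f (insert o1 A) + \<Gamma> / (6 * B) * q + FS"
      using main s r candW by (simp add: T_def)
    moreover have "(c o1 \<le> (1 - \<epsilon>') * B \<and> b = B - c o1) \<longrightarrow> f (insert o1 A) + \<Gamma> / (6 * B) * q + FS \<le> (3 + 7 * \<epsilon>') * FS"
    proof
      assume h: "c o1 \<le> (1 - \<epsilon>') * B \<and> b = B - c o1"
      have "q \<le> B" using qc h co1 by linarith
      then have "\<Gamma> / (6 * B) * q \<le> \<Gamma> / (6 * B) * B" by (rule mult_left_mono) (use Gpos Bpos in auto)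
      also have "\<dots> = \<Gamma> / 6" using Bpos by simp
      finally have g: "\<Gamma> / (6 * B) * q \<le> \<Gamma> / 6" .
      have d: "(3 + 7 * \<epsilon>') * FS = 3 * FS + 7 * (\<epsilon>' * FS)" by (simp add: algebra_simps)
      have "0 \<le> \<epsilon>' * FS" using eps FS0 by simp
      then show "f (insert o1 A) + \<Gamma> / (6 * B) * q + FS \<le> (3 + 7 * \<epsilon>') * FS"
        unfolding d using fo1 h FS g by linarith
    qed
    moreover have "((1 - \<epsilon>') * B < c o1 \<and> b = (1 - \<epsilon>') * B) \<longrightarrow> f (insert o1 A) + \<Gamma> / (6 * B) * q + FS \<le> (3 + 7 * \<epsilon>') * FS"
    proof
      assume h: "(1 - \<epsilon>') * B < c o1 \<and> b = (1 - \<epsilon>') * B"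
      have "q \<le> \<epsilon>' * B" using qc h by blast
      then have "\<Gamma> / (6 * B) * q \<le> \<Gamma> / (6 * B) * (\<epsilon>' * B)" by (rule mult_left_mono) (use Gpos Bpos in auto)
      also have "\<dots> = \<epsilon>' * \<Gamma> / 6" using Bpos by simp
      also have "\<dots> \<le> \<epsilon>' * FS / 6" using FS eps by (simp add: mult_left_mono)
      finally have "\<Gamma> / (6 * B) * q \<le> \<epsilon>' * FS / 6" .
      moreover have "0 \<le> \<epsilon>' * FS" using eps FS0 by simp
      moreover have d: "(3 + 7 * \<epsilon>') * FS = 3 * FS + 7 * (\<epsilon>' * FS)" by (simp add: algebra_simps)
      ultimately show "f (insert o1 A) + \<Gamma> / (6 * B) * q + FS \<le> (3 + 7 * \<epsilon>') * FS"
        unfolding d using fo1 by linarith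
    qed
    ultimately show ?thesis using bcase by auto
  next
    case False
    then have ilt: "i < length ZF" using pp(2) by simp
    obtain t1 where t1: "t1 < T" "Z t1 = take i ZF"
      "\<theta> (t1 div n) * cost c (set (take (Suc i) ZF)) \<le> f (set (take (Suc i) ZF))"
      using prefix_witness[of i T] ilt by (auto simp: ZF_def)
    define k where "k = t1 div n"
    define C1 where "C1 = cost c (set (take (Suc i) ZF))"
    have C1b: "\<beta> < C1" using pp(4) ilt by (simp add: C1_def)
    have fC1: "f (set (take (Suc i) ZF)) \<le> FS"
    proof -
      have e: "set (take (Suc i) ZF) = insert (ZF ! i) A" using ilt by (simp add: A_def take_Suc_conv_app_nth)
      have eV: "ZF ! i \<in> V" using ilt invT by auto
      have "cost c (set (take (Suc i) ZF)) \<le> cost c (set ZF)"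
        by (rule cost_mono) (use invT cpos in \<open>auto dest: in_set_takeD intro: less_imp_le\<close>)
      then show ?thesis using candA[OF eV] invT(3) e by simp
    qed
    have thkC: "\<theta> k * \<beta> \<le> FS"
    proof -
      have "\<theta> k * \<beta> \<le> \<theta> k * C1" using C1b th_nn by (simp add: mult_left_mono)
      then show ?thesis using t1(3) fC1 by (simp add: k_def C1_def)
    qed
    show ?thesis
    proof (cases "k = 0")
      case True
      have "\<theta>0 * (\<epsilon>' * B) \<le> \<theta>0 * \<beta>" using b1 th_nn[of 0] thdef[of 0] by (simp add: mult_left_mono)
      moreover have "\<theta>0 * (\<epsilon>' * B) = 19 * \<Gamma> / 6" using eps Bpos by (simp add: th0)
      ultimately have "19 * \<Gamma> / 6 \<le> FS" using thkC True thdef[of 0] by simp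
      then have "f Q \<le> 6 * FS" using opt19 by linarith
      then show ?thesis by blast
    next
      case False
      have t: "Suc (k - 1) * n \<le> t1" using False by (simp add: k_def)
      have s: "(\<Sum>u\<in>Q' - A. f (insert u A) - f A) \<le> \<theta> (k - 1) * q + f (set (W t1))"
        using side_sum[OF t Q'V(2) Q'V(1)] cuB t1(2) by (simp add: gn_def q_def A_def)
      have fW: "f (set (W t1)) \<le> FS" using fW_mono[of t1 T] t1(1) candW by (simp add: T_def)
      define x where "x = \<theta> (k - 1)"
      have x0: "0 \<le> x" using th_nn by (simp add: x_def)
      have thk: "\<theta> k = x * (1 - \<epsilon>')" using False by (simp add: x_def thdef power_eq_if)
      have xb: "x * (1 - \<epsilon>') * b \<le> (1 + \<epsilon>') * FS"
      proof -
        have "x * (1 - \<epsilon>') * b \<le> x * (1 - \<epsilon>') * (\<beta> * (1 + \<epsilon>'))"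
          using bl(2) x0 eps by (intro mult_left_mono) (auto simp: \<beta>_def)
        also have "\<dots> = (\<theta> k * \<beta>) * (1 + \<epsilon>')" by (simp add: thk algebra_simps)
        also have "\<dots> \<le> FS * (1 + \<epsilon>')" using thkC eps by (simp add: mult_right_mono)
        finally show ?thesis by (simp add: algebra_simps)
      qed
      have tot: "f (Q \<union> A) \<le> f (insert o1 A) + x * q + FS" using main s fW by (simp add: x_def)
      have c1: "(c o1 \<le> (1 - \<epsilon>') * B \<and> b = B - c o1) \<longrightarrow> f (Q \<union> A) \<le> (3 + 7 * \<epsilon>') * FS"
      proof
        assume h: "c o1 \<le> (1 - \<epsilon>') * B \<and> b = B - c o1"
        have "x * q \<le> (1 + 7 * \<epsilon>') * FS"
          by (rule ar1[OF eps x0 _ xb q0]) (use qc h FS0 in auto)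
        then show "f (Q \<union> A) \<le> (3 + 7 * \<epsilon>') * FS" using tot fo1 h by (simp add: algebra_simps)
      qed
      have c2: "((1 - \<epsilon>') * B < c o1 \<and> b = (1 - \<epsilon>') * B) \<longrightarrow> f (Q \<union> A) \<le> (3 + 7 * \<epsilon>') * FS"
      proof
        assume h: "(1 - \<epsilon>') * B < c o1 \<and> b = (1 - \<epsilon>') * B"
        have "x * q \<le> 7 * \<epsilon>' * FS"
          by (rule ar2[OF eps x0 _ Bpos _ q0]) (use qc h FS0 xb in auto)
        then show "f (Q \<union> A) \<le> (3 + 7 * \<epsilon>') * FS" using tot fo1 by (simp add: algebra_simps)
      qed
      show ?thesis using c1 c2 bcase by blast
    qed
  qed
  then show ?thesis using pp(1) by (simp add: A_def \<beta>_def ZF_def T_def)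
qed

end


lemma fold_snoc_map: "fold (\<lambda>l acc. acc @ [g l]) xs a = a @ map g xs"
  by (induction xs arbitrary: a) auto

lemma DLA_fst:
  "fst (DLA f c B \<epsilon> vs) =
   (let S' = fst (LA f c B vs); \<Gamma> = f S'; \<epsilon>' = \<epsilon> / 14; \<Delta> = nat \<lceil>log 2 (1 / \<epsilon>') / \<epsilon>'\<rceil>;
        \<theta>0 = 19 * \<Gamma> / (6 * \<epsilon>' * B);
        st = fold (\<lambda>k st. fold (\<lambda>e st. fst (p1_step f c B (\<theta>0 * (1 - \<epsilon>') ^ k) e st)) vs st) [0..<p1_passes \<epsilon>' \<Gamma> B] ([], [])
    in fst (argmaxM (qry f) ([S', set (fst st), set (snd st)] @
         map (\<lambda>l. fst (p2_cand f c B \<epsilon>' vs (fst st) l)) [0..<Suc \<Delta>] @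
         map (\<lambda>l. fst (p2_cand f c B \<epsilon>' vs (snd st) l)) [0..<Suc \<Delta>])))"
  unfolding DLA_def Let_def
  by (simp only: fst_bnd fst_ret fst_qry fst_foldM fold_snoc_map append_Nil)

lemma p2_cand_fst:
  "fst (p2_cand f c B \<epsilon>' vs xs l) =
    insert (fst (argmaxM (\<lambda>e. qry f (insert e (prefix_set c (\<epsilon>' * B * (1 + \<epsilon>') ^ l) xs)))
                 (filter (\<lambda>e. cost c (insert e (prefix_set c (\<epsilon>' * B * (1 + \<epsilon>') ^ l) xs)) \<le> B) vs)))
     (prefix_set c (\<epsilon>' * B * (1 + \<epsilon>') ^ l) xs)"
  by (simp add: p2_cand_def Let_def)

fun trc :: "('a set \<Rightarrow> real) \<Rightarrow> ('a \<Rightarrow> real) \<Rightarrow> real \<Rightarrow> (nat \<Rightarrow> real) \<Rightarrow> 'a list \<Rightarrow> nat \<Rightarrow> 'a list \<times> 'a list" where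
  "trc f c B \<theta> vs 0 = ([], [])"
| "trc f c B \<theta> vs (Suc t) = fst (p1_step f c B (\<theta> (t div length vs)) (vs ! (t mod length vs)) (trc f c B \<theta> vs t))"

lemma trc_pass:
  "j \<le> length vs \<Longrightarrow> fold (\<lambda>e st. fst (p1_step f c B (\<theta> k) e st)) (take j vs) (trc f c B \<theta> vs (k * length vs))
     = trc f c B \<theta> vs (k * length vs + j)"
proof (induction j)
  case 0 then show ?case by simp
next
  case (Suc j)
  have jl: "j < length vs" using Suc.prems by simp
  have tk: "take (Suc j) vs = take j vs @ [vs ! j]" using jl by (simp add: take_Suc_conv_app_nth)
  have dm: "(k * length vs + j) div length vs = k" "(k * length vs + j) mod length vs = j" using jl by (auto simp: div_add1_eq)
  show ?case using Suc.IH jl dm by (simp add: tk)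
qed

lemma trc_all:
  "fold (\<lambda>k st. fold (\<lambda>e st. fst (p1_step f c B (\<theta> k) e st)) vs st) [0..<K] ([], []) = trc f c B \<theta> vs (K * length vs)"
proof (induction K)
  case 0 then show ?case by simp
next
  case (Suc K)
  have "fold (\<lambda>e st. fst (p1_step f c B (\<theta> K) e st)) vs (trc f c B \<theta> vs (K * length vs))
        = trc f c B \<theta> vs (K * length vs + length vs)"
    using trc_pass[of "length vs" vs f c B \<theta> K] by simp
  then show ?case using Suc.IH by (simp add: add.commute)
qed

lemma ln2_le: "ln (2::real) \<le> 13/14"
proof -
  have a: "1 + 13/28 \<le> exp (13/28::real)" by (rule exp_ge_add_one_self)
  have "exp (13/14::real) = exp (13/28) * exp (13/28)" by (simp flip: exp_add)
  also have "\<dots> \<ge> (1 + 13/28) * (1 + 13/28)" using a by (intro mult_mono) auto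
  finally have "(2::real) \<le> exp (13/14)" by simp
  then show ?thesis by (metis exp_gt_zero ln_exp ln_le_cancel_iff zero_less_numeral)
qed

lemma Delta_prop:
  fixes e :: real
  assumes "0 < e" "e \<le> 1/14"
  shows "1 \<le> e * (1 + e) ^ nat \<lceil>log 2 (1 / e) / e\<rceil>"
proof -
  define D where "D = nat \<lceil>log 2 (1 / e) / e\<rceil>"
  have l0: "0 \<le> ln (1 / e)" using assms by simp
  have lg: "log 2 (1 / e) = ln (1 / e) / ln 2" by (simp add: log_def)
  have ln2p: "0 < ln (2::real)" by simp
  have "ln (1 / e) \<le> log 2 (1 / e)"
  proof -
    have "ln (1 / e) * ln 2 \<le> ln (1 / e) * 1" using l0 ln_2_less_1 by (intro mult_left_mono) auto
    then show ?thesis unfolding lg using ln2p by (simp add: le_divide_eq)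
  qed
  have D1: "log 2 (1 / e) / e \<le> real D" unfolding D_def by linarith
  have "ln (1 + e) \<ge> e - e^2" using assms by (intro ln_one_plus_pos_lower_bound) auto
  moreover have "e - e^2 \<ge> e * ln 2"
  proof -
    have "ln 2 \<le> 1 - e" using ln2_le assms by linarith
    then have "e * ln 2 \<le> e * (1 - e)" using assms by (intro mult_left_mono) auto
    then show ?thesis by (simp add: power2_eq_square algebra_simps)
  qed
  ultimately have le2: "e * ln 2 \<le> ln (1 + e)" by linarith
  have "ln (1 / e) = (log 2 (1 / e) / e) * (e * ln 2)" unfolding lg using assms by (simp add: field_simps)
  also have "\<dots> \<le> real D * ln (1 + e)"
    using D1 le2 assms ln2p l0 by (intro mult_mono) (auto simp: lg)
  also have "\<dots> = ln ((1 + e) ^ D)" using assms by (simp add: ln_realpow)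
  finally have "ln (1 / e) \<le> ln ((1 + e) ^ D)" .
  then have "1 / e \<le> (1 + e) ^ D" using assms by (subst (asm) ln_le_cancel_iff) auto
  then show ?thesis using assms by (simp add: D_def field_simps)
qed


lemma passes_props:
  fixes e \<Gamma> B :: real
  assumes e: "0 < e" "e \<le> 1/14" and B: "0 < B" and G: "0 \<le> \<Gamma>"
  shows "1 \<le> p1_passes e \<Gamma> B \<and>
         (0 < \<Gamma> \<longrightarrow> 19 * \<Gamma> / (6 * e * B) * (1 - e) ^ (p1_passes e \<Gamma> B - 1) < \<Gamma> / (6 * B)) \<and>
         real (p1_passes e \<Gamma> B) \<le> ln (19 / (e * (1 - e))) / e + 2"
proof -
  define P where "P = (\<lambda>k. 19 / e * (1 - e) ^ k < 1 - e)"
  have e1: "0 < 1 - e" using e by simp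
  have Keq: "p1_passes e \<Gamma> B = (LEAST k. P k)"
  proof (cases "0 < \<Gamma>")
    case True
    have g: "0 < \<Gamma> / (6 * B)" using True B by simp
    have "\<And>k. (\<not> (19 * \<Gamma> / (6 * e * B) * (1 - e) ^ k \<ge> \<Gamma> * (1 - e) / (6 * B))) = P k"
    proof -
      fix k
      have a: "19 * \<Gamma> / (6 * e * B) * (1 - e) ^ k = (\<Gamma> / (6 * B)) * (19 / e * (1 - e) ^ k)" by (simp add: field_simps)
      have b: "\<Gamma> * (1 - e) / (6 * B) = (\<Gamma> / (6 * B)) * (1 - e)" by simp
      show "(\<not> (19 * \<Gamma> / (6 * e * B) * (1 - e) ^ k \<ge> \<Gamma> * (1 - e) / (6 * B))) = P k"
        unfolding a b P_def by (simp only: not_le mult_less_cancel_left_pos[OF g])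
    qed
    then show ?thesis using True by (simp add: p1_passes_def)
  next
    case False
    then show ?thesis by (simp add: p1_passes_def P_def not_le)
  qed
  define L where "L = ln (19 / (e * (1 - e)))"
  have L0: "0 \<le> L"
  proof -
    have "e * (1 - e) \<le> 1" using e by (simp add: mult_le_one)
    then have "1 \<le> 19 / (e * (1 - e))" using e e1 by (simp add: field_simps)
    then show ?thesis by (simp add: L_def)
  qed
  define k0 where "k0 = nat \<lceil>L / e\<rceil> + 1"
  have k0r: "real k0 \<le> L / e + 2" using L0 e by (simp add: k0_def) linarith
  have k0g: "L < e * real k0"
  proof -
    have "L / e < real k0" using L0 e by (simp add: k0_def) linarith
    then show ?thesis using e by (simp add: field_simps)
  qed
  have Pk0: "P k0"
  proof -
    have "(1 - e) ^ k0 \<le> exp (- e) ^ k0"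
      using e1 by (intro power_mono) (auto simp: order.trans[OF _ exp_ge_add_one_self])
    also have "\<dots> = exp (- (e * real k0))" by (simp flip: exp_of_nat_mult add: algebra_simps)
    also have "\<dots> < exp (- L)" using k0g by simp
    also have "\<dots> = e * (1 - e) / 19" unfolding L_def using e e1 by (simp add: exp_minus exp_ln)
    finally have "(1 - e) ^ k0 < e * (1 - e) / 19" .
    then show ?thesis unfolding P_def using e by (simp add: field_simps)
  qed
  have Kle: "p1_passes e \<Gamma> B \<le> k0" unfolding Keq by (rule Least_le) (rule Pk0)
  have PK: "P (p1_passes e \<Gamma> B)" unfolding Keq by (rule LeastI) (rule Pk0)
  have nP0: "\<not> P 0"
  proof -
    have h: "1 \<le> 19 / e" using e by (simp add: field_simps)
    show ?thesis unfolding P_def using h e by (simp only: power_0 mult_1_right)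
  qed
  have K1: "1 \<le> p1_passes e \<Gamma> B" using PK nP0 by (cases "p1_passes e \<Gamma> B") auto
  have thK: "0 < \<Gamma> \<longrightarrow> 19 * \<Gamma> / (6 * e * B) * (1 - e) ^ (p1_passes e \<Gamma> B - 1) < \<Gamma> / (6 * B)"
  proof
    assume G: "0 < \<Gamma>"
    define K where "K = p1_passes e \<Gamma> B"
    have "(1 - e) ^ K = (1 - e) ^ (K - 1) * (1 - e)" using K1 unfolding K_def[symmetric]
      by (metis Suc_diff_1 less_le_trans zero_less_one power_Suc2)
    then have "(19 / e * (1 - e) ^ (K - 1)) * (1 - e) < 1 * (1 - e)" using PK by (simp add: P_def K_def)
    then have a: "19 / e * (1 - e) ^ (K - 1) < 1" using e1 by (simp only: mult_less_cancel_right_pos)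
    have g: "0 < \<Gamma> / (6 * B)" using G B by simp
    have "(\<Gamma> / (6 * B)) * (19 / e * (1 - e) ^ (K - 1)) < (\<Gamma> / (6 * B)) * 1"
      using a g by (simp only: mult_less_cancel_left_pos)
    moreover have "19 * \<Gamma> / (6 * e * B) * (1 - e) ^ (K - 1) = (\<Gamma> / (6 * B)) * (19 / e * (1 - e) ^ (K - 1))"
      by (simp add: field_simps)
    ultimately show "19 * \<Gamma> / (6 * e * B) * (1 - e) ^ (p1_passes e \<Gamma> B - 1) < \<Gamma> / (6 * B)"
      by (simp add: K_def)
  qed
  show ?thesis using K1 thK Kle k0r by (simp add: L_def)
qed


lemma trc_p1tr:
  assumes "sfun V f c B" "distinct vs" "set vs = V" "vs \<noteq> []" "\<And>k. 0 \<le> \<theta> k" "\<And>k. \<theta> (Suc k) \<le> \<theta> k"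
  shows "p1tr V f c B vs \<theta> (\<lambda>t. fst (trc f c B \<theta> vs t)) (\<lambda>t. snd (trc f c B \<theta> vs t))"
proof -
  have st: "\<And>t. stp1 f c B (\<theta> (t div length vs)) (vs ! (t mod length vs)) (fst (trc f c B \<theta> vs t))
      (fst (trc f c B \<theta> vs (Suc t))) (snd (trc f c B \<theta> vs t)) (snd (trc f c B \<theta> vs (Suc t)))"
  proof -
    fix t
    have ev: "vs ! (t mod length vs) \<in> V" using assms(3,4) by auto
    have "c (vs ! (t mod length vs)) > 0" using ev assms(1) by (simp add: sfun_def)
    from p1_step_stp1[of c "vs ! (t mod length vs)" f B "\<theta> (t div length vs)" "fst (trc f c B \<theta> vs t)" "snd (trc f c B \<theta> vs t)", OF this]
    show "?thesis t" by simp
  qed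
  show ?thesis
    by (rule p1tr.intro[OF assms(1) p1tr_axioms.intro]) (use assms st in auto)
qed

context sfun
begin

lemma p2_props:
  assumes xs: "set xs \<subseteq> V" "cost c (set xs) \<le> B" and Vv: "set vs = V" and ne: "vs \<noteq> []" and cB: "\<forall>e\<in>V. c e \<le> B"
  shows "fst (p2_cand f c B \<epsilon>' vs xs l) \<subseteq> V \<and> cost c (fst (p2_cand f c B \<epsilon>' vs xs l)) \<le> B \<and>
    (\<forall>e\<in>V. cost c (insert e (prefix_set c (\<epsilon>' * B * (1 + \<epsilon>') ^ l) xs)) \<le> B \<longrightarrow>
        f (insert e (prefix_set c (\<epsilon>' * B * (1 + \<epsilon>') ^ l) xs)) \<le> f (fst (p2_cand f c B \<epsilon>' vs xs l)))"
proof -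
  define A where "A = prefix_set c (\<epsilon>' * B * (1 + \<epsilon>') ^ l) xs"
  define L where "L = filter (\<lambda>e. cost c (insert e A) \<le> B) vs"
  define eX where "eX = fst (argmaxM (\<lambda>e. qry f (insert e A)) L)"
  have eq: "fst (p2_cand f c B \<epsilon>' vs xs l) = insert eX A"
    by (simp add: p2_cand_fst A_def L_def eX_def)
  have Ax: "A \<subseteq> set xs" by (auto simp: A_def prefix_set_def dest: in_set_takeD)
  have finx: "finite (set xs)" by simp
  have cA: "cost c A \<le> B"
    using cost_mono[OF finx Ax, of c] xs cpos by (force intro: less_imp_le)
  have Lne: "L \<noteq> []"
  proof (cases "A = {}")
    case True
    obtain e where e: "e \<in> set vs" using ne by (cases vs) auto
    then have "cost c (insert e A) \<le> B" using True cB Vv by (simp add: cost_def)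
    then show ?thesis using e by (auto simp: L_def filter_empty_conv)
  next
    case False
    then obtain e where e: "e \<in> A" by blast
    then have "e \<in> set vs" using Ax xs Vv by auto
    moreover have "cost c (insert e A) \<le> B" using e cA by (simp add: insert_absorb)
    ultimately show ?thesis by (auto simp: L_def filter_empty_conv)
  qed
  have am: "eX \<in> set L" "\<forall>x\<in>set L. f (insert x A) \<le> f (insert eX A)"
    using argmaxM_props[OF Lne, of "\<lambda>e. qry f (insert e A)"] by (auto simp: eX_def)
  have "eX \<in> V" "cost c (insert eX A) \<le> B" using am Vv by (auto simp: L_def)
  moreover have "A \<subseteq> V" using Ax xs by auto
  moreover have "\<forall>e\<in>V. cost c (insert e A) \<le> B \<longrightarrow> f (insert e A) \<le> f (insert eX A)"
    using am Vv by (auto simp: L_def)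
  ultimately show ?thesis by (simp add: eq A_def)
qed

end


context sfun
begin

lemma DLA_approx:
  assumes dv: "distinct vs" and Vv: "set vs = V" and ne: "vs \<noteq> []" and cB: "\<forall>e\<in>V. c e \<le> B"
    and eps: "0 < \<epsilon>" "\<epsilon> < 1"
  shows "fst (DLA f c B \<epsilon> vs) \<subseteq> V \<and> cost c (fst (DLA f c B \<epsilon> vs)) \<le> B \<and>
         (\<forall>Q. Q \<subseteq> V \<and> cost c Q \<le> B \<longrightarrow> f Q \<le> (6 + \<epsilon>) * f (fst (DLA f c B \<epsilon> vs)))"
proof -
  define S' where "S' = fst (LA f c B vs)"
  define \<Gamma> where "\<Gamma> = f S'"
  define \<epsilon>' where "\<epsilon>' = \<epsilon> / 14"
  define \<Delta> where "\<Delta> = nat \<lceil>log 2 (1 / \<epsilon>') / \<epsilon>'\<rceil>"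
  define \<theta>0 where "\<theta>0 = 19 * \<Gamma> / (6 * \<epsilon>' * B)"
  define \<theta> where "\<theta> = (\<lambda>k. \<theta>0 * (1 - \<epsilon>') ^ k)"
  define K where "K = p1_passes \<epsilon>' \<Gamma> B"
  define T where "T = K * length vs"
  define X where "X = (\<lambda>t. fst (trc f c B \<theta> vs t))"
  define Y where "Y = (\<lambda>t. snd (trc f c B \<theta> vs t))"
  define cands where "cands = [S', set (X T), set (Y T)] @
         map (\<lambda>l. fst (p2_cand f c B \<epsilon>' vs (X T) l)) [0..<Suc \<Delta>] @
         map (\<lambda>l. fst (p2_cand f c B \<epsilon>' vs (Y T) l)) [0..<Suc \<Delta>]"
  have D: "fst (DLA f c B \<epsilon> vs) = fst (argmaxM (qry f) cands)"
    unfolding cands_def X_def Y_def T_def K_def \<theta>_def \<theta>0_def \<Delta>_def \<epsilon>'_def \<Gamma>_def S'_def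
    by (simp only: DLA_fst Let_def trc_all)
  have LAp: "S' \<subseteq> V" "cost c S' \<le> B" "\<forall>Q. Q \<subseteq> V \<and> cost c Q \<le> B \<longrightarrow> f Q \<le> 18 * \<Gamma>"
    "\<forall>u\<in>V. f {u} \<le> \<Gamma>"
    using LA_thm[OF dv Vv ne cB] by (auto simp: S'_def \<Gamma>_def)
  have G0: "0 \<le> \<Gamma>" using nn LAp(1) by (simp add: \<Gamma>_def)
  have e': "0 < \<epsilon>'" "\<epsilon>' \<le> 1/14" using eps by (auto simp: \<epsilon>'_def)
  have th00: "0 \<le> \<theta>0" using G0 e' Bpos by (simp add: \<theta>0_def)
  have thnn: "\<And>k. 0 \<le> \<theta> k" using th00 e' by (simp add: \<theta>_def)
  have than: "\<And>k. \<theta> (Suc k) \<le> \<theta> k"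
  proof -
    fix k
    have "(1 - \<epsilon>') ^ Suc k \<le> (1 - \<epsilon>') ^ k" using e' by (simp add: power_decreasing)
    then show "\<theta> (Suc k) \<le> \<theta> k" unfolding \<theta>_def using th00 by (simp add: mult_left_mono)
  qed
  have pX: "p1tr V f c B vs \<theta> X Y"
    unfolding X_def Y_def by (rule trc_p1tr[of V f c B vs \<theta>, OF sfun_axioms dv Vv ne thnn than])
  interpret PX: p1tr V f c B vs \<theta> X Y by (rule pX)
  have pY: "p1tr V f c B vs \<theta> Y X" by (rule PX.swap)
  have invT: "set (X T) \<subseteq> V" "set (Y T) \<subseteq> V" "cost c (set (X T)) \<le> B" "cost c (set (Y T)) \<le> B"
    "set (X T) \<inter> set (Y T) = {}"
    using PX.inv[of T] by auto
  have cne: "cands \<noteq> []" by (simp add: cands_def)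
  define S where "S = fst (argmaxM (qry f) cands)"
  have Sp: "S \<in> set cands" "\<forall>x\<in>set cands. f x \<le> f S"
    using argmaxM_props[OF cne, of "qry f"] by (auto simp: S_def)
  have p2X: "\<And>l. fst (p2_cand f c B \<epsilon>' vs (X T) l) \<subseteq> V \<and> cost c (fst (p2_cand f c B \<epsilon>' vs (X T) l)) \<le> B \<and>
    (\<forall>e\<in>V. cost c (insert e (prefix_set c (\<epsilon>' * B * (1 + \<epsilon>') ^ l) (X T))) \<le> B \<longrightarrow>
        f (insert e (prefix_set c (\<epsilon>' * B * (1 + \<epsilon>') ^ l) (X T))) \<le> f (fst (p2_cand f c B \<epsilon>' vs (X T) l)))"
    by (rule p2_props[OF invT(1) invT(3) Vv ne cB])
  have p2Y: "\<And>l. fst (p2_cand f c B \<epsilon>' vs (Y T) l) \<subseteq> V \<and> cost c (fst (p2_cand f c B \<epsilon>' vs (Y T) l)) \<le> B \<and>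
    (\<forall>e\<in>V. cost c (insert e (prefix_set c (\<epsilon>' * B * (1 + \<epsilon>') ^ l) (Y T))) \<le> B \<longrightarrow>
        f (insert e (prefix_set c (\<epsilon>' * B * (1 + \<epsilon>') ^ l) (Y T))) \<le> f (fst (p2_cand f c B \<epsilon>' vs (Y T) l)))"
    by (rule p2_props[OF invT(2) invT(4) Vv ne cB])
  have cX: "\<And>l. fst (p2_cand f c B \<epsilon>' vs (X T) l) \<subseteq> V \<and> cost c (fst (p2_cand f c B \<epsilon>' vs (X T) l)) \<le> B"
    using p2X by blast
  have cY: "\<And>l. fst (p2_cand f c B \<epsilon>' vs (Y T) l) \<subseteq> V \<and> cost c (fst (p2_cand f c B \<epsilon>' vs (Y T) l)) \<le> B"
    using p2Y by blast
  have allc: "\<forall>x\<in>set cands. x \<subseteq> V \<and> cost c x \<le> B"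
  proof -
    have cXa: "\<And>l. fst (p2_cand f c B \<epsilon>' vs (X T) l) \<subseteq> V" and cXb: "\<And>l. cost c (fst (p2_cand f c B \<epsilon>' vs (X T) l)) \<le> B"
     and cYa: "\<And>l. fst (p2_cand f c B \<epsilon>' vs (Y T) l) \<subseteq> V" and cYb: "\<And>l. cost c (fst (p2_cand f c B \<epsilon>' vs (Y T) l)) \<le> B"
      using cX cY by blast+
    show ?thesis unfolding cands_def using LAp(1,2) invT(1-4)
      by (auto dest: subsetD[OF cXa] subsetD[OF cYa] simp: cXb cYb)
  qed
  have SV: "S \<subseteq> V" "cost c S \<le> B"
    using Sp(1) allc by auto
  have FS: "\<Gamma> \<le> f S" using Sp(2) by (simp add: cands_def \<Gamma>_def)
  have fXT: "f (set (X T)) \<le> f S" and fYT: "f (set (Y T)) \<le> f S" using Sp(2) by (auto simp: cands_def)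
  have approx: "\<forall>Q. Q \<subseteq> V \<and> cost c Q \<le> B \<longrightarrow> f Q \<le> (6 + \<epsilon>) * f S"
  proof (intro allI impI)
    fix Q assume Q: "Q \<subseteq> V \<and> cost c Q \<le> B"
    have FS0: "0 \<le> f S" using FS G0 by linarith
    have e6: "0 \<le> (6 + \<epsilon>) * f S" using FS0 eps by simp
    show "f Q \<le> (6 + \<epsilon>) * f S"
    proof (cases "\<Gamma> = 0 \<or> Q = {}")
      case True
      then show ?thesis using LAp(3) Q e6 f0 by auto
    next
      case False
      then have Gp: "0 < \<Gamma>" and Qne: "Q \<noteq> {}" using G0 by auto
      have finQ: "finite Q" using Q finV finite_subset by blast
      obtain o1 where o1: "o1 \<in> Q" "\<forall>u\<in>Q. c u \<le> c o1"
      proof -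
        have "Max (c ` Q) \<in> c ` Q" using finQ Qne by simp
        then obtain o1 where "o1 \<in> Q" "c o1 = Max (c ` Q)" by auto
        moreover have "\<forall>u\<in>Q. c u \<le> Max (c ` Q)" using finQ by simp
        ultimately show ?thesis using that by auto
      qed
      have co1: "0 < c o1" using cpos o1 Q by auto
      define b where "b = (if c o1 \<le> (1 - \<epsilon>') * B then B - c o1 else (1 - \<epsilon>') * B)"
      have bcase: "(c o1 \<le> (1 - \<epsilon>') * B \<and> b = B - c o1) \<or> ((1 - \<epsilon>') * B < c o1 \<and> b = (1 - \<epsilon>') * B)"
        by (auto simp: b_def)
      have eB: "0 < \<epsilon>' * B" using e' Bpos by simp
      have b_lt: "b < B" using bcase co1 eB by (auto simp: algebra_simps)
      have h14: "\<epsilon>' * B \<le> 1/14 * B" using e' Bpos by (intro mult_right_mono) auto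
      have b_ge: "\<epsilon>' * B \<le> b"
      proof -
        have "(1 - \<epsilon>') * B = B - \<epsilon>' * B" by (simp add: algebra_simps)
        then show ?thesis using bcase h14 Bpos by auto
      qed
      define \<beta> where "\<beta> = (\<lambda>l. \<epsilon>' * B * (1 + \<epsilon>') ^ l)"
      define Pl where "Pl = (\<lambda>l. l \<le> \<Delta> \<and> \<beta> l \<le> b)"
      define l where "l = (GREATEST l. Pl l)"
      have P0: "Pl 0" using b_ge by (simp add: Pl_def \<beta>_def)
      have bndP: "\<forall>y. Pl y \<longrightarrow> y \<le> \<Delta>" by (simp add: Pl_def)
      have Pl_l: "Pl l" unfolding l_def by (rule GreatestI_nat[of Pl 0 \<Delta>, OF P0]) (use bndP in blast)
      have lmax: "\<And>y. Pl y \<Longrightarrow> y \<le> l" unfolding l_def using Greatest_le_nat[of Pl _ \<Delta>] bndP by blast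
      have bD: "B \<le> \<beta> \<Delta>"
        using Delta_prop[OF e'] Bpos by (simp add: \<beta>_def \<Delta>_def mult.assoc mult.left_commute)
      have lD: "l < \<Delta>" using Pl_l bD b_lt by (metis Pl_def le_less not_less order.trans)
      have bl1: "\<beta> l \<le> b" using Pl_l by (simp add: Pl_def)
      have bl2: "b < \<beta> l * (1 + \<epsilon>')"
      proof -
        have "\<not> Pl (Suc l)" using lmax by fastforce
        then have "b < \<beta> (Suc l)" using lD by (simp add: Pl_def)
        then show ?thesis by (simp add: \<beta>_def algebra_simps)
      qed
      have pp: "1 \<le> K" "\<theta> (K - 1) < \<Gamma> / (6 * B)"
        using passes_props[OF e' Bpos G0] Gp by (auto simp: K_def \<theta>_def \<theta>0_def)
      have o1V: "o1 \<in> V" using o1 Q by auto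
      have Qp: "Q \<subseteq> V" "o1 \<in> Q" "cost c Q \<le> B" "\<And>u. u \<in> Q \<Longrightarrow> c u \<le> c o1" using Q o1 by auto
      have "f Q \<le> 18 * \<Gamma>" using LAp(3) Q by blast
      then have opt19: "f Q \<le> 19 * \<Gamma>" using G0 by linarith
      have sing: "f {o1} \<le> \<Gamma>" using LAp(4) o1V by auto
      have thdef: "\<And>k. \<theta> k = \<theta>0 * (1 - \<epsilon>') ^ k" by (simp add: \<theta>_def)
      have lS: "fst (p2_cand f c B \<epsilon>' vs (X T) l) \<in> set cands" "fst (p2_cand f c B \<epsilon>' vs (Y T) l) \<in> set cands"
        using lD by (auto simp: cands_def)
      have candPX: "\<And>e. e \<in> V \<Longrightarrow> cost c (insert e (prefix_set c (\<epsilon>' * B * (1 + \<epsilon>') ^ l) (X (K * length vs)))) \<le> B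
        \<Longrightarrow> f (insert e (prefix_set c (\<epsilon>' * B * (1 + \<epsilon>') ^ l) (X (K * length vs)))) \<le> f S"
      proof -
        fix e assume e: "e \<in> V" "cost c (insert e (prefix_set c (\<epsilon>' * B * (1 + \<epsilon>') ^ l) (X (K * length vs)))) \<le> B"
        have "f (insert e (prefix_set c (\<epsilon>' * B * (1 + \<epsilon>') ^ l) (X T))) \<le> f (fst (p2_cand f c B \<epsilon>' vs (X T) l))"
          using p2X[of l] e unfolding T_def by blast
        moreover have "f (fst (p2_cand f c B \<epsilon>' vs (X T) l)) \<le> f S" using Sp(2) lS(1) by blast
        ultimately show "f (insert e (prefix_set c (\<epsilon>' * B * (1 + \<epsilon>') ^ l) (X (K * length vs)))) \<le> f S"
          unfolding T_def by linarith
      qed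
      have candPY: "\<And>e. e \<in> V \<Longrightarrow> cost c (insert e (prefix_set c (\<epsilon>' * B * (1 + \<epsilon>') ^ l) (Y (K * length vs)))) \<le> B
        \<Longrightarrow> f (insert e (prefix_set c (\<epsilon>' * B * (1 + \<epsilon>') ^ l) (Y (K * length vs)))) \<le> f S"
      proof -
        fix e assume e: "e \<in> V" "cost c (insert e (prefix_set c (\<epsilon>' * B * (1 + \<epsilon>') ^ l) (Y (K * length vs)))) \<le> B"
        have "f (insert e (prefix_set c (\<epsilon>' * B * (1 + \<epsilon>') ^ l) (Y T))) \<le> f (fst (p2_cand f c B \<epsilon>' vs (Y T) l))"
          using p2Y[of l] e unfolding T_def by blast
        moreover have "f (fst (p2_cand f c B \<epsilon>' vs (Y T) l)) \<le> f S" using Sp(2) lS(2) by blast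
        ultimately show "f (insert e (prefix_set c (\<epsilon>' * B * (1 + \<epsilon>') ^ l) (Y (K * length vs)))) \<le> f S"
          unfolding T_def by linarith
      qed
      have candWX: "f (set (Y (K * length vs))) \<le> f S" using fYT by (simp add: T_def)
      have candWY: "f (set (X (K * length vs))) \<le> f S" using fXT by (simp add: T_def)
      have bl1': "\<epsilon>' * B * (1 + \<epsilon>') ^ l \<le> b" and bl2': "b < \<epsilon>' * B * (1 + \<epsilon>') ^ l * (1 + \<epsilon>')"
        using bl1 bl2 by (simp_all add: \<beta>_def)
      have th0: "\<theta>0 = 19 * \<Gamma> / (6 * \<epsilon>' * B)" by (simp add: \<theta>0_def)
      have DX: "dside V f c B vs \<theta> X Y \<epsilon>' \<Gamma> \<theta>0 K (f S) Q o1 b l"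
        by (rule dside.intro[OF pX dside_axioms.intro[where V=V and f=f and c=c and B=B and vs=vs and \<theta>=\<theta> and Z=X and W=Y and \<epsilon>'=\<epsilon>' and \<Gamma>=\<Gamma> and ?\<theta>0.0=\<theta>0 and K=K and FS="f S" and Q=Q and ?o1.0=o1 and b=b and l=l, OF e'(1) e'(2) thdef th0 Gp pp(1) pp(2) FS opt19 sing candWX candPX Qp(1) Qp(2) Qp(3) Qp(4) bl1' bl2' bcase]])
      have DY: "dside V f c B vs \<theta> Y X \<epsilon>' \<Gamma> \<theta>0 K (f S) Q o1 b l"
        by (rule dside.intro[OF pY dside_axioms.intro[where V=V and f=f and c=c and B=B and vs=vs and \<theta>=\<theta> and Z=Y and W=X and \<epsilon>'=\<epsilon>' and \<Gamma>=\<Gamma> and ?\<theta>0.0=\<theta>0 and K=K and FS="f S" and Q=Q and ?o1.0=o1 and b=b and l=l, OF e'(1) e'(2) thdef th0 Gp pp(1) pp(2) FS opt19 sing candWY candPY Qp(1) Qp(2) Qp(3) Qp(4) bl1' bl2' bcase]])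
      define AX where "AX = prefix_set c (\<epsilon>' * B * (1 + \<epsilon>') ^ l) (X (K * length vs))"
      define AY where "AY = prefix_set c (\<epsilon>' * B * (1 + \<epsilon>') ^ l) (Y (K * length vs))"
      have rX: "f (Q \<union> AX) \<le> (3 + 7 * \<epsilon>') * f S \<or> f Q \<le> 6 * f S"
        using dside.side_result[OF DX] by (simp add: AX_def)
      have rY: "f (Q \<union> AY) \<le> (3 + 7 * \<epsilon>') * f S \<or> f Q \<le> 6 * f S"
        using dside.side_result[OF DY] by (simp add: AY_def)
      have AXs: "AX \<subseteq> set (X T)" "AY \<subseteq> set (Y T)"
        by (auto simp: AX_def AY_def T_def prefix_set_def dest: in_set_takeD)
      have two: "f Q \<le> f (Q \<union> AX) + f (Q \<union> AY)"
        by (rule two_sides) (use Q AXs invT in auto)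
      have "6 * f S \<le> (6 + \<epsilon>) * f S" using FS0 eps by (simp add: mult_right_mono)
      moreover have "(3 + 7 * \<epsilon>') * f S + (3 + 7 * \<epsilon>') * f S = (6 + \<epsilon>) * f S"
        by (simp add: \<epsilon>'_def algebra_simps)
      ultimately show ?thesis using rX rY two by linarith
    qed
  qed
  show ?thesis using SV approx D by (simp add: S_def)
qed

end


lemma snd_la_step: "snd (la_step f c B e st) = 6"
  by (simp add: la_step_def Let_def)

lemma snd_p1_step: "snd (p1_step f c B th e st) \<le> 4"
  by (simp add: p1_step_def Let_def)

lemma snd_p2_cand: "snd (p2_cand f c B \<epsilon>' vs xs l) \<le> length vs"
  by (simp add: p2_cand_def Let_def snd_argmaxM)

lemma snd_LA: "vs \<noteq> [] \<Longrightarrow> snd (LA f c B vs) \<le> 10 * length vs"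
proof -
  assume ne: "vs \<noteq> []"
  have a: "snd (argmaxM (\<lambda>e. qry f {e}) vs) = length vs" by (simp add: snd_argmaxM)
  have b: "snd (foldM (la_step f c B) (filter (\<lambda>e. c e \<le> B / 2) vs) ([], [])) \<le> 6 * length (filter (\<lambda>e. c e \<le> B / 2) vs)"
    by (rule snd_foldM_le) (simp add: snd_la_step)
  have c: "6 * length (filter (\<lambda>e. c e \<le> B / 2) vs) \<le> 6 * length vs" by simp
  have n1: "1 \<le> length vs" using ne by (cases vs) auto
  have eq: "snd (LA f c B vs) = length vs + (snd (foldM (la_step f c B) (filter (\<lambda>e. c e \<le> B / 2) vs) ([], [])) + 3)"
    by (simp add: LA_def snd_argmaxM)
  show ?thesis using eq b c n1 by linarith
qed

lemma snd_DLA: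
  assumes ne: "vs \<noteq> []"
  shows "snd (DLA f c B \<epsilon> vs) \<le> length vs * (18 + 4 * p1_passes (\<epsilon> / 14) (f (fst (LA f c B vs))) B
            + 4 * nat \<lceil>log 2 (1 / (\<epsilon> / 14)) / (\<epsilon> / 14)\<rceil>)"
proof -
  define n where "n = length vs"
  define K where "K = p1_passes (\<epsilon> / 14) (f (fst (LA f c B vs))) B"
  define \<Delta> where "\<Delta> = nat \<lceil>log 2 (1 / (\<epsilon> / 14)) / (\<epsilon> / 14)\<rceil>"
  have n1: "1 \<le> n" using ne by (cases vs) (auto simp: n_def)
  have s1: "\<And>(g::nat \<Rightarrow> real) st. snd (foldM (\<lambda>k st. foldM (\<lambda>e st. p1_step f c B (g k) e st) vs st) [0..<K] st) \<le> (4 * n) * K"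
  proof -
    fix g :: "nat \<Rightarrow> real" and st
    have inner: "\<And>k s. snd (foldM (\<lambda>e st. p1_step f c B (g k) e st) vs s) \<le> 4 * n"
    proof -
      fix k s
      show "snd (foldM (\<lambda>e st. p1_step f c B (g k) e st) vs s) \<le> 4 * n"
        unfolding n_def by (rule snd_foldM_le) (rule snd_p1_step)
    qed
    show "snd (foldM (\<lambda>k st. foldM (\<lambda>e st. p1_step f c B (g k) e st) vs st) [0..<K] st) \<le> (4 * n) * K"
      using snd_foldM_le[of "[0..<K]" "\<lambda>k st. foldM (\<lambda>e st. p1_step f c B (g k) e st) vs st" "4 * n" st] inner
      by simp
  qed
  have s2: "\<And>xs. snd (foldM (\<lambda>l acc. bnd (p2_cand f c B (\<epsilon> / 14) vs xs l) (\<lambda>X. ret (acc @ [X]))) [0..<Suc \<Delta>] []) \<le> n * Suc \<Delta>"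
  proof -
    fix xs
    show "snd (foldM (\<lambda>l acc. bnd (p2_cand f c B (\<epsilon> / 14) vs xs l) (\<lambda>X. ret (acc @ [X]))) [0..<Suc \<Delta>] []) \<le> n * Suc \<Delta>"
      using snd_foldM_le[of "[0..<Suc \<Delta>]" "\<lambda>l acc. bnd (p2_cand f c B (\<epsilon> / 14) vs xs l) (\<lambda>X. ret (acc @ [X]))" n "[]"]
        snd_p2_cand[of f c B "\<epsilon> / 14" vs xs] by (simp add: n_def)
  qed
  have sLA: "snd (LA f c B vs) \<le> 10 * n" using snd_LA[OF ne] by (simp add: n_def)
  have eq: "snd (DLA f c B \<epsilon> vs) = snd (LA f c B vs) + (1 +
     (snd (foldM (\<lambda>k st. foldM (\<lambda>e st. p1_step f c B (19 * f (fst (LA f c B vs)) / (6 * (\<epsilon> / 14) * B) * (1 - \<epsilon> / 14) ^ k) e st) vs st) [0..<K] ([], [])) +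
     (snd (foldM (\<lambda>l acc. bnd (p2_cand f c B (\<epsilon> / 14) vs (fst (fst (foldM (\<lambda>k st. foldM (\<lambda>e st. p1_step f c B (19 * f (fst (LA f c B vs)) / (6 * (\<epsilon> / 14) * B) * (1 - \<epsilon> / 14) ^ k) e st) vs st) [0..<K] ([], [])))) l) (\<lambda>X. ret (acc @ [X]))) [0..<Suc \<Delta>] []) +
     (snd (foldM (\<lambda>l acc. bnd (p2_cand f c B (\<epsilon> / 14) vs (snd (fst (foldM (\<lambda>k st. foldM (\<lambda>e st. p1_step f c B (19 * f (fst (LA f c B vs)) / (6 * (\<epsilon> / 14) * B) * (1 - \<epsilon> / 14) ^ k) e st) vs st) [0..<K] ([], [])))) l) (\<lambda>X. ret (acc @ [X]))) [0..<Suc \<Delta>] []) +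
      (3 + 2 * Suc \<Delta>)))))"
    unfolding DLA_def Let_def K_def \<Delta>_def
    apply (simp only: snd_bnd fst_bnd snd_qry fst_qry snd_ret fst_ret)
    apply (subst snd_argmaxM)
     apply simp
    apply (simp add: fst_foldM fold_snoc_map)
    done
  have t1: "snd (foldM (\<lambda>k st. foldM (\<lambda>e st. p1_step f c B (19 * f (fst (LA f c B vs)) / (6 * (\<epsilon> / 14) * B) * (1 - \<epsilon> / 14) ^ k) e st) vs st) [0..<K] ([], [])) \<le> (4 * n) * K" by (rule s1)
  have t2: "snd (foldM (\<lambda>l acc. bnd (p2_cand f c B (\<epsilon> / 14) vs (fst (fst (foldM (\<lambda>k st. foldM (\<lambda>e st. p1_step f c B (19 * f (fst (LA f c B vs)) / (6 * (\<epsilon> / 14) * B) * (1 - \<epsilon> / 14) ^ k) e st) vs st) [0..<K] ([], [])))) l) (\<lambda>X. ret (acc @ [X]))) [0..<Suc \<Delta>] []) \<le> n * Suc \<Delta>" by (rule s2)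
  have t3: "snd (foldM (\<lambda>l acc. bnd (p2_cand f c B (\<epsilon> / 14) vs (snd (fst (foldM (\<lambda>k st. foldM (\<lambda>e st. p1_step f c B (19 * f (fst (LA f c B vs)) / (6 * (\<epsilon> / 14) * B) * (1 - \<epsilon> / 14) ^ k) e st) vs st) [0..<K] ([], [])))) l) (\<lambda>X. ret (acc @ [X]))) [0..<Suc \<Delta>] []) \<le> n * Suc \<Delta>" by (rule s2)
  have d1: "\<Delta> \<le> n * \<Delta>" using n1 by simp
  have d2: "n * Suc \<Delta> = n * \<Delta> + n" by simp
  have d3: "n * (18 + 4 * K + 4 * \<Delta>) = 18 * n + 4 * (n * K) + 4 * (n * \<Delta>)" by (simp add: algebra_simps)
  have d4: "(4 * n) * K = 4 * (n * K)" by simp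
  have "snd (DLA f c B \<epsilon> vs) \<le> n * (18 + 4 * K + 4 * \<Delta>)"
  proof -
    have "snd (DLA f c B \<epsilon> vs) \<le> 10 * n + (1 + ((4 * n) * K + (n * Suc \<Delta> + (n * Suc \<Delta> + (3 + 2 * Suc \<Delta>)))))"
      unfolding eq
      by (rule add_mono[OF sLA add_mono[OF order.refl add_mono[OF t1 add_mono[OF t2 add_mono[OF t3 order.refl]]]]])
    then have h: "snd (DLA f c B \<epsilon> vs) \<le> 10 * n + (1 + (4 * n * K + (n * Suc \<Delta> + (n * Suc \<Delta> + (3 + 2 * Suc \<Delta>)))))" by simp
    define a where "a = n * K"
    define d where "d = n * \<Delta>"
    have e1: "4 * n * K = 4 * a" by (simp add: a_def)
    have e2: "n * Suc \<Delta> = d + n" by (simp add: d_def)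
    have Dd: "\<Delta> \<le> d" using n1 by (simp add: d_def)
    have "snd (DLA f c B \<epsilon> vs) \<le> 10 * n + (1 + (4 * a + (d + n + (d + n + (3 + 2 * Suc \<Delta>)))))" using h unfolding e1 e2 .
    then have "snd (DLA f c B \<epsilon> vs) \<le> 18 * n + 4 * a + 4 * d" using Dd n1 by simp
    then show ?thesis unfolding d3 by (simp add: a_def d_def)
  qed
  then show ?thesis by (simp add: n_def K_def \<Delta>_def)
qed


lemma count_arith:
  fixes \<epsilon> :: real and K \<Delta> :: nat
  assumes e: "0 < \<epsilon>" "\<epsilon> < 1"
    and K: "real K \<le> ln (19 / ((\<epsilon> / 14) * (1 - \<epsilon> / 14))) / (\<epsilon> / 14) + 2"
    and D: "\<Delta> = nat \<lceil>log 2 (1 / (\<epsilon> / 14)) / (\<epsilon> / 14)\<rceil>"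
  shows "real (18 + 4 * K + 4 * \<Delta>) \<le> 40000 * (1 + log 2 (1 / \<epsilon>) / \<epsilon>)"
proof -
  define L where "L = log 2 (1 / \<epsilon>) / \<epsilon>"
  define e' where "e' = \<epsilon> / 14"
  have x1: "1 \<le> 1 / \<epsilon>" using e by simp
  have lg0: "0 \<le> log 2 (1 / \<epsilon>)" using x1 e by (subst zero_le_log_cancel_iff) auto
  have L0: "0 \<le> L" unfolding L_def using lg0 e by simp
  have inv: "1 / \<epsilon> \<le> 2 + 2 * L"
  proof (cases "\<epsilon> < 1/2")
    case True
    have "2 \<le> 1 / \<epsilon>" using True e by (simp add: field_simps)
    then have "log 2 2 \<le> log 2 (1 / \<epsilon>)" using e by (subst log_le_cancel_iff) auto
    then have "1 \<le> log 2 (1 / \<epsilon>)" by simp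
    then have "1 / \<epsilon> \<le> log 2 (1 / \<epsilon>) / \<epsilon>" using e by (simp add: divide_right_mono)
    then show ?thesis using L0 by (simp add: L_def)
  next
    case False
    then have "1 / \<epsilon> \<le> 2" using e by (simp add: field_simps)
    then show ?thesis using L0 by linarith
  qed
  have lnle: "ln (1 / \<epsilon>) \<le> log 2 (1 / \<epsilon>)"
  proof -
    have l0: "0 \<le> ln (1 / \<epsilon>)" using x1 by simp
    have "ln (1 / \<epsilon>) * ln 2 \<le> ln (1 / \<epsilon>) * 1" using l0 ln_2_less_1 by (intro mult_left_mono) auto
    then show ?thesis by (simp add: log_def le_divide_eq)
  qed
  have e'p: "0 < e'" "e' \<le> 1/14" "13/14 \<le> 1 - e'" using e by (auto simp: e'_def)
  have Kb: "real K \<le> 8100 + 8100 * L"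
  proof -
    have eq: "19 / (e' * (1 - e')) = (266 / (1 - e')) * (1 / \<epsilon>)" using e e'p by (simp add: e'_def field_simps)
    have p1: "0 < 266 / (1 - e')" using e'p by simp
    have "ln (19 / (e' * (1 - e'))) = ln (266 / (1 - e')) + ln (1 / \<epsilon>)"
      unfolding eq by (subst ln_mult) (use p1 e in auto)
    moreover have "ln (266 / (1 - e')) \<le> 287"
    proof -
      have "ln (266 / (1 - e')) \<le> 266 / (1 - e')" using p1 by (rule ln_bound)
      also have "\<dots> \<le> 266 / (13/14)" using e'p by (intro divide_left_mono) auto
      finally show ?thesis by simp
    qed
    ultimately have a: "ln (19 / (e' * (1 - e'))) \<le> 287 + log 2 (1 / \<epsilon>)" using lnle by linarith
    have "ln (19 / (e' * (1 - e'))) / e' \<le> (287 + log 2 (1 / \<epsilon>)) / e'" using a e'p by (simp add: divide_right_mono)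
    also have "\<dots> = 4018 * (1 / \<epsilon>) + 14 * L" using e by (simp add: e'_def L_def field_simps)
    finally have "real K \<le> 4018 * (1 / \<epsilon>) + 14 * L + 2" using K by (simp add: e'_def)
    then show ?thesis using inv L0 by linarith
  qed
  have Db: "real \<Delta> \<le> 130 + 130 * L"
  proof -
    have l14: "log 2 14 \<le> (4::real)"
    proof -
      have "log 2 14 \<le> log 2 (16::real)" by (subst log_le_cancel_iff) auto
      also have "log 2 (16::real) = log 2 (2 ^ 4)" by simp
      also have "\<dots> = 4" by (subst log_nat_power) auto
      finally show ?thesis .
    qed
    have lm: "log 2 (1 / e') = log 2 14 + log 2 (1 / \<epsilon>)"
    proof -
      have h: "1 / e' = 14 * (1 / \<epsilon>)" by (simp add: e'_def)
      show ?thesis unfolding h by (subst log_mult) (use e in auto)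
    qed
    have x0: "0 \<le> log 2 (1 / e') / e'" using e'p by simp
    have "real \<Delta> \<le> log 2 (1 / e') / e' + 1" using x0 by (simp add: D e'_def)
    also have "log 2 (1 / e') / e' \<le> (4 + log 2 (1 / \<epsilon>)) / e'" using lm l14 e'p by (simp add: divide_right_mono)
    also have "(4 + log 2 (1 / \<epsilon>)) / e' = 56 * (1 / \<epsilon>) + 14 * L" using e by (simp add: e'_def L_def field_simps)
    finally show ?thesis using inv L0 by linarith
  qed
  have "real (18 + 4 * K + 4 * \<Delta>) = 18 + 4 * real K + 4 * real \<Delta>" by simp
  also have "\<dots> \<le> 40000 + 40000 * L" using Kb Db L0 by linarith
  also have "\<dots> = 40000 * (1 + L)" by simp
  finally show ?thesis by (simp add: L_def)
qed


theorem theorem3: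
  "\<exists>C::real. \<forall>(vs::'a list) (f::'a set \<Rightarrow> real) (c::'a \<Rightarrow> real) (B::real) (\<epsilon>::real).
     distinct vs \<and> vs \<noteq> [] \<and>
     submodular_on (set vs) f \<and> (\<forall>S. S \<subseteq> set vs \<longrightarrow> f S \<ge> 0) \<and> f {} = 0 \<and>
     B > 0 \<and> (\<forall>e\<in>set vs. 0 < c e \<and> c e \<le> B) \<and> 0 < \<epsilon> \<and> \<epsilon> < 1
     \<longrightarrow> (let S = fst (DLA f c B \<epsilon> vs); q = snd (DLA f c B \<epsilon> vs) in
           S \<subseteq> set vs \<and> cost c S \<le> B \<and>
           opt f c B (set vs) \<le> (6 + \<epsilon>) * f S \<and>
           real q \<le> C * real (length vs) * (1 + log 2 (1 / \<epsilon>) / \<epsilon>))"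
proof (rule exI[of _ 40000], intro allI impI)
  fix vs :: "'a list" and f :: "'a set \<Rightarrow> real" and c :: "'a \<Rightarrow> real" and B :: real and \<epsilon> :: real
  assume H: "distinct vs \<and> vs \<noteq> [] \<and>
     submodular_on (set vs) f \<and> (\<forall>S. S \<subseteq> set vs \<longrightarrow> f S \<ge> 0) \<and> f {} = 0 \<and>
     B > 0 \<and> (\<forall>e\<in>set vs. 0 < c e \<and> c e \<le> B) \<and> 0 < \<epsilon> \<and> \<epsilon> < 1"
  have dv: "distinct vs" and ne: "vs \<noteq> []" and cB: "\<forall>e\<in>set vs. c e \<le> B" and eps: "0 < \<epsilon>" "\<epsilon> < 1"
    using H by auto
  have sf: "sfun (set vs) f c B"
    by (rule sfun.intro) (use H in auto)
  interpret sfun "set vs" f c B by (rule sf)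
  have A: "fst (DLA f c B \<epsilon> vs) \<subseteq> set vs \<and> cost c (fst (DLA f c B \<epsilon> vs)) \<le> B \<and>
         (\<forall>Q. Q \<subseteq> set vs \<and> cost c Q \<le> B \<longrightarrow> f Q \<le> (6 + \<epsilon>) * f (fst (DLA f c B \<epsilon> vs)))"
    by (rule DLA_approx[OF dv refl ne cB eps])
  define S where "S = fst (DLA f c B \<epsilon> vs)"
  define q where "q = snd (DLA f c B \<epsilon> vs)"
  have optb: "opt f c B (set vs) \<le> (6 + \<epsilon>) * f S"
  proof -
    define M where "M = {f T | T. T \<subseteq> set vs \<and> cost c T \<le> B}"
    have "M \<subseteq> f ` Pow (set vs)" by (auto simp: M_def)
    then have fin: "finite M" by (rule finite_subset) simp
    have nem: "M \<noteq> {}" using H by (auto simp: M_def intro!: exI[of _ "{}"])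
    have "\<forall>x\<in>M. x \<le> (6 + \<epsilon>) * f S" using A by (auto simp: M_def S_def)
    then have "Max M \<le> (6 + \<epsilon>) * f S" using fin nem by simp
    then show ?thesis by (simp add: opt_def M_def)
  qed
  define K where "K = p1_passes (\<epsilon> / 14) (f (fst (LA f c B vs))) B"
  define \<Delta> where "\<Delta> = nat \<lceil>log 2 (1 / (\<epsilon> / 14)) / (\<epsilon> / 14)\<rceil>"
  have qb: "q \<le> length vs * (18 + 4 * K + 4 * \<Delta>)"
    using snd_DLA[OF ne, of f c B \<epsilon>] by (simp add: q_def K_def \<Delta>_def)
  have G0: "0 \<le> f (fst (LA f c B vs))" using LA_thm[OF dv refl ne cB] nn by auto
  have Kb: "real K \<le> ln (19 / ((\<epsilon> / 14) * (1 - \<epsilon> / 14))) / (\<epsilon> / 14) + 2"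
    using passes_props[of "\<epsilon> / 14" B "f (fst (LA f c B vs))"] eps Bpos G0 by (simp add: K_def)
  have cnt: "real (18 + 4 * K + 4 * \<Delta>) \<le> 40000 * (1 + log 2 (1 / \<epsilon>) / \<epsilon>)"
    by (rule count_arith[OF eps Kb \<Delta>_def])
  have "real q \<le> real (length vs) * real (18 + 4 * K + 4 * \<Delta>)"
    using qb by (metis of_nat_le_iff of_nat_mult)
  also have "\<dots> \<le> real (length vs) * (40000 * (1 + log 2 (1 / \<epsilon>) / \<epsilon>))"
    using cnt by (intro mult_left_mono) auto
  finally have qr: "real q \<le> 40000 * real (length vs) * (1 + log 2 (1 / \<epsilon>) / \<epsilon>)" by (simp add: algebra_simps)
  show "let S = fst (DLA f c B \<epsilon> vs); q = snd (DLA f c B \<epsilon> vs) in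
           S \<subseteq> set vs \<and> cost c S \<le> B \<and>
           opt f c B (set vs) \<le> (6 + \<epsilon>) * f S \<and>
           real q \<le> 40000 * real (length vs) * (1 + log 2 (1 / \<epsilon>) / \<epsilon>)"
    unfolding Let_def using A optb qr by (simp add: S_def q_def)
qed

end
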